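(* Let $G$ be a connected diamond-free graph. Then $G$ is CIS if and only if one of the following holds: (i) $G$ is clique simplicial; (ii) $G\cong K_{m,n}$ for some integers $m,n\ge 2$; (iii) $G\cong L(K_{n,n})$ for some integer $n\ge 3$.
   Context: All graphs are finite, simple and undirected. A clique is a set of pairwise adjacent vertices, a stable set a set of pairwise non-adjacent vertices; "maximal" means inclusion-maximal. A clique is strong if it intersects every maximal stable set. A graph is CIS if every maximal clique is strong (equivalently, every maximal clique intersects every maximal stable set). The diamond is $K_4$ minus one edge; a graph is diamond-free if it has no induced subgraph isomorphic to the diamond. A vertex $v$ is simplicial if its closed neighborhood $N[v]=N(v)\cup\{v\}$ is a clique; a clique is simplicial if it equals $N[v]$ for some simplicial vertex $v$ (such a clique is maximal). A graph is clique simplicial if every maximal clique is simplicial. $K_{m,n}$ is the complete bipartite graph with parts of sizes $m,n$; $L(H)$ denotes the line graph of $H$. *)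

theory Defs
  imports Main
begin

definition graph :: "'a set \<Rightarrow> ('a \<Rightarrow> 'a \<Rightarrow> bool) \<Rightarrow> bool" where
  "graph V E \<longleftrightarrow> finite V \<and> (\<forall>x y. E x y \<longrightarrow> x \<in> V \<and> y \<in> V)
     \<and> (\<forall>x y. E x y \<longrightarrow> E y x) \<and> (\<forall>x. \<not> E x x)"

definition connected_graph :: "'a set \<Rightarrow> ('a \<Rightarrow> 'a \<Rightarrow> bool) \<Rightarrow> bool" where
  "connected_graph V E \<longleftrightarrow> V \<noteq> {} \<and> (\<forall>x\<in>V. \<forall>y\<in>V. E\<^sup>*\<^sup>* x y)"

definition clique :: "'a set \<Rightarrow> ('a \<Rightarrow> 'a \<Rightarrow> bool) \<Rightarrow> 'a set \<Rightarrow> bool" where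
  "clique V E K \<longleftrightarrow> K \<subseteq> V \<and> (\<forall>x\<in>K. \<forall>y\<in>K. x \<noteq> y \<longrightarrow> E x y)"

definition stable :: "'a set \<Rightarrow> ('a \<Rightarrow> 'a \<Rightarrow> bool) \<Rightarrow> 'a set \<Rightarrow> bool" where
  "stable V E S \<longleftrightarrow> S \<subseteq> V \<and> (\<forall>x\<in>S. \<forall>y\<in>S. \<not> E x y)"

definition maximal_clique :: "'a set \<Rightarrow> ('a \<Rightarrow> 'a \<Rightarrow> bool) \<Rightarrow> 'a set \<Rightarrow> bool" where
  "maximal_clique V E K \<longleftrightarrow> clique V E K \<and> (\<forall>K'. clique V E K' \<and> K \<subseteq> K' \<longrightarrow> K' = K)"

definition maximal_stable :: "'a set \<Rightarrow> ('a \<Rightarrow> 'a \<Rightarrow> bool) \<Rightarrow> 'a set \<Rightarrow> bool" where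
  "maximal_stable V E S \<longleftrightarrow> stable V E S \<and> (\<forall>S'. stable V E S' \<and> S \<subseteq> S' \<longrightarrow> S' = S)"

definition strong_clique :: "'a set \<Rightarrow> ('a \<Rightarrow> 'a \<Rightarrow> bool) \<Rightarrow> 'a set \<Rightarrow> bool" where
  "strong_clique V E K \<longleftrightarrow> clique V E K \<and> (\<forall>S. maximal_stable V E S \<longrightarrow> K \<inter> S \<noteq> {})"

definition CIS :: "'a set \<Rightarrow> ('a \<Rightarrow> 'a \<Rightarrow> bool) \<Rightarrow> bool" where
  "CIS V E \<longleftrightarrow> (\<forall>K. maximal_clique V E K \<longrightarrow> strong_clique V E K)"

definition diamond_free :: "'a set \<Rightarrow> ('a \<Rightarrow> 'a \<Rightarrow> bool) \<Rightarrow> bool" where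
  "diamond_free V E \<longleftrightarrow> \<not> (\<exists>a\<in>V. \<exists>b\<in>V. \<exists>c\<in>V. \<exists>d\<in>V. distinct [a, b, c, d] \<and>
      E a b \<and> E a c \<and> E a d \<and> E b c \<and> E b d \<and> \<not> E c d)"

definition closed_nbhd :: "'a set \<Rightarrow> ('a \<Rightarrow> 'a \<Rightarrow> bool) \<Rightarrow> 'a \<Rightarrow> 'a set" where
  "closed_nbhd V E v = {u \<in> V. E v u} \<union> {v}"

definition simplicial_vertex :: "'a set \<Rightarrow> ('a \<Rightarrow> 'a \<Rightarrow> bool) \<Rightarrow> 'a \<Rightarrow> bool" where
  "simplicial_vertex V E v \<longleftrightarrow> v \<in> V \<and> clique V E (closed_nbhd V E v)"

definition simplicial_clique :: "'a set \<Rightarrow> ('a \<Rightarrow> 'a \<Rightarrow> bool) \<Rightarrow> 'a set \<Rightarrow> bool" where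
  "simplicial_clique V E K \<longleftrightarrow> (\<exists>v. simplicial_vertex V E v \<and> K = closed_nbhd V E v)"

definition clique_simplicial :: "'a set \<Rightarrow> ('a \<Rightarrow> 'a \<Rightarrow> bool) \<Rightarrow> bool" where
  "clique_simplicial V E \<longleftrightarrow> (\<forall>K. maximal_clique V E K \<longrightarrow> simplicial_clique V E K)"

definition graph_iso :: "'a set \<Rightarrow> ('a \<Rightarrow> 'a \<Rightarrow> bool) \<Rightarrow> 'b set \<Rightarrow> ('b \<Rightarrow> 'b \<Rightarrow> bool) \<Rightarrow> bool" where
  "graph_iso V E V' E' \<longleftrightarrow> (\<exists>f. bij_betw f V V' \<and> (\<forall>x\<in>V. \<forall>y\<in>V. E x y \<longleftrightarrow> E' (f x) (f y)))"

definition Kmn_V :: "nat \<Rightarrow> nat \<Rightarrow> (nat + nat) set" where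
  "Kmn_V m n = Inl ` {..<m} \<union> Inr ` {..<n}"

definition Kmn_E :: "nat \<Rightarrow> nat \<Rightarrow> (nat + nat) \<Rightarrow> (nat + nat) \<Rightarrow> bool" where
  "Kmn_E m n x y \<longleftrightarrow> x \<in> Kmn_V m n \<and> y \<in> Kmn_V m n \<and>
     ((\<exists>i j. x = Inl i \<and> y = Inr j) \<or> (\<exists>i j. x = Inr j \<and> y = Inl i))"

definition line_V :: "'a set \<Rightarrow> ('a \<Rightarrow> 'a \<Rightarrow> bool) \<Rightarrow> 'a set set" where
  "line_V V E = {{x, y} | x y. x \<in> V \<and> y \<in> V \<and> E x y}"

definition line_E :: "'a set \<Rightarrow> ('a \<Rightarrow> 'a \<Rightarrow> bool) \<Rightarrow> 'a set \<Rightarrow> 'a set \<Rightarrow> bool" where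
  "line_E V E e f \<longleftrightarrow> e \<in> line_V V E \<and> f \<in> line_V V E \<and> e \<noteq> f \<and> e \<inter> f \<noteq> {}"

end

theory Submission
  imports Defs
begin

locale sg =
  fixes V :: "'a set" and E :: "'a \<Rightarrow> 'a \<Rightarrow> bool"
  assumes gr: "graph V E"
begin

lemma finV: "finite V" using gr by (simp add: graph_def)
lemma symE: "E x y \<Longrightarrow> E y x" using gr by (simp add: graph_def)
lemma irrE: "\<not> E x x" using gr by (simp add: graph_def)
lemma inV1: "E x y \<Longrightarrow> x \<in> V" using gr by (simp add: graph_def)
lemma inV2: "E x y \<Longrightarrow> y \<in> V" using gr by (simp add: graph_def)
lemma neqE: "E x y \<Longrightarrow> x \<noteq> y" using irrE by auto

lemma mc_clique: "maximal_clique V E K \<Longrightarrow> clique V E K"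
  by (simp add: maximal_clique_def)
lemma mc_sub: "maximal_clique V E K \<Longrightarrow> K \<subseteq> V"
  by (simp add: maximal_clique_def clique_def)
lemma mc_fin: "maximal_clique V E K \<Longrightarrow> finite K"
  using mc_sub finV finite_subset by blast
lemma mc_adj: "maximal_clique V E K \<Longrightarrow> a \<in> K \<Longrightarrow> b \<in> K \<Longrightarrow> a \<noteq> b \<Longrightarrow> E a b"
  by (simp add: maximal_clique_def clique_def)

lemma mc_out:
  assumes K: "maximal_clique V E K" and v: "v \<in> V" "v \<notin> K"
  shows "\<exists>c\<in>K. \<not> E v c"
proof (rule ccontr)
  assume "\<not> ?thesis"
  hence a: "\<forall>c\<in>K. E v c" by auto
  have "clique V E (insert v K)"
    using K v a unfolding maximal_clique_def clique_def by (auto dest: symE)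
  hence "insert v K = K" using K unfolding maximal_clique_def by blast
  thus False using v by auto
qed

lemma ms_stable: "maximal_stable V E S \<Longrightarrow> stable V E S"
  by (simp add: maximal_stable_def)

lemma ms_out:
  assumes S: "maximal_stable V E S" and v: "v \<in> V" "v \<notin> S"
  shows "\<exists>s\<in>S. E v s"
proof (rule ccontr)
  assume "\<not> ?thesis"
  hence a: "\<forall>s\<in>S. \<not> E v s" by auto
  have "stable V E (insert v S)"
    using S v a irrE unfolding maximal_stable_def stable_def by (auto dest: symE)
  hence "insert v S = S" using S unfolding maximal_stable_def by blast
  thus False using v by auto
qed

lemma ext_clique:
  assumes "clique V E C" shows "\<exists>K. maximal_clique V E K \<and> C \<subseteq> K"
proof -
  let ?A = "{K. clique V E K}"
  have "?A \<subseteq> Pow V" by (auto simp: clique_def)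
  hence fin: "finite ?A" using finV finite_subset by blast
  obtain m where m: "m \<in> ?A" "C \<le> m" "\<forall>b\<in>?A. m \<le> b \<longrightarrow> m = b"
    using finite_has_maximal2[OF fin, of C] assms by auto
  thus ?thesis unfolding maximal_clique_def by auto
qed

lemma ext_stable:
  assumes "stable V E C" shows "\<exists>K. maximal_stable V E K \<and> C \<subseteq> K"
proof -
  let ?A = "{K. stable V E K}"
  have "?A \<subseteq> Pow V" by (auto simp: stable_def)
  hence fin: "finite ?A" using finV finite_subset by blast
  obtain m where m: "m \<in> ?A" "C \<le> m" "\<forall>b\<in>?A. m \<le> b \<longrightarrow> m = b"
    using finite_has_maximal2[OF fin, of C] assms by auto
  thus ?thesis unfolding maximal_stable_def by auto
qed

lemma clique_pair: "E a b \<Longrightarrow> clique V E {a, b}"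
  using inV1 inV2 by (auto simp: clique_def dest: symE)

lemma clique_single: "a \<in> V \<Longrightarrow> clique V E {a}"
  by (auto simp: clique_def)

lemma nonsimp_out:
  assumes K: "maximal_clique V E K" and v: "v \<in> K" and ns: "\<not> simplicial_vertex V E v"
  shows "\<exists>u. E v u \<and> u \<notin> K"
proof (rule ccontr)
  assume "\<not> ?thesis"
  hence "closed_nbhd V E v \<subseteq> K" using v by (auto simp: closed_nbhd_def)
  hence "clique V E (closed_nbhd V E v)" using mc_clique[OF K] by (auto simp: clique_def)
  thus False using ns v mc_sub[OF K] by (auto simp: simplicial_vertex_def)
qed

end

locale dfg = sg +
  assumes dfree: "diamond_free V E"
begin

lemma nodiamond:
  assumes "a \<in> V" "b \<in> V" "c \<in> V" "d \<in> V"
  shows "\<not> (distinct [a,b,c,d] \<and> E a b \<and> E a c \<and> E a d \<and> E b c \<and> E b d \<and> \<not> E c d)"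
proof
  assume H: "distinct [a,b,c,d] \<and> E a b \<and> E a c \<and> E a d \<and> E b c \<and> E b d \<and> \<not> E c d"
  have "\<exists>a\<in>V. \<exists>b\<in>V. \<exists>c\<in>V. \<exists>d\<in>V. distinct [a, b, c, d] \<and>
      E a b \<and> E a c \<and> E a d \<and> E b c \<and> E b d \<and> \<not> E c d"
    apply (rule bexI[of _ a], rule bexI[of _ b], rule bexI[of _ c], rule bexI[of _ d])
    using H assms by auto
  thus False using dfree unfolding diamond_free_def by auto
qed

lemma F1:
  assumes K: "maximal_clique V E K" and vK: "v \<notin> K" and a: "a \<in> K" and b: "b \<in> K"
    and va: "E v a" and vb: "E v b"
  shows "a = b"
proof (rule ccontr)
  assume ab: "a \<noteq> b"
  have v: "v \<in> V" using va inV1 by auto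
  obtain c where c: "c \<in> K" "\<not> E v c" using mc_out[OF K v vK] by auto
  have ca: "c \<noteq> a" "c \<noteq> b" using c va vb by auto
  have vn: "v \<noteq> a" "v \<noteq> b" "v \<noteq> c" using vK a b c by auto
  have e1: "E a b" using mc_adj[OF K a b ab] .
  have e2: "E a c" using mc_adj[OF K a c(1)] ca by auto
  have e3: "E b c" using mc_adj[OF K b c(1)] ca by auto
  have inv: "a \<in> V" "b \<in> V" "c \<in> V" using mc_sub[OF K] a b c by auto
  have d: "distinct [a,b,v,c]" using ab ca vn by auto
  have nd: "\<not> (distinct [a,b,v,c] \<and> E a b \<and> E a v \<and> E a c \<and> E b v \<and> E b c \<and> \<not> E v c)"
    using nodiamond[OF inv(1) inv(2) v inv(3)] .
  show False using nd d e1 e2 e3 symE[OF va] symE[OF vb] c(2) by simp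
qed

lemma mc_inter:
  assumes K: "maximal_clique V E K" and Q: "maximal_clique V E Q" and KQ: "K \<noteq> Q"
    and a: "a \<in> K" "a \<in> Q" and b: "b \<in> K" "b \<in> Q"
  shows "a = b"
proof (rule ccontr)
  assume ab: "a \<noteq> b"
  have "\<not> Q \<subseteq> K" using K Q KQ unfolding maximal_clique_def by blast
  then obtain v where v: "v \<in> Q" "v \<notin> K" by auto
  have "v \<noteq> a" "v \<noteq> b" using v a b by auto
  hence "E v a" "E v b" using mc_adj[OF Q] v a b by auto
  thus False using F1[OF K v(2) a(1) b(1)] ab by auto
qed

lemma card_nbr_le1:
  assumes K: "maximal_clique V E K" and vK: "v \<notin> K"
  shows "card {a\<in>K. E v a} \<le> 1"
proof -
  have "finite {a\<in>K. E v a}" using mc_fin[OF K] by auto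
  moreover have "\<forall>a1\<in>{a\<in>K. E v a}. \<forall>a2\<in>{a\<in>K. E v a}. a1 = a2"
    using F1[OF K vK] by blast
  ultimately show ?thesis using card_le_Suc0_iff_eq by (metis One_nat_def)
qed

end


context sg begin

lemma iso_inv:
  assumes h: "bij_betw h V' V" and adj: "\<forall>a\<in>V'. \<forall>b\<in>V'. E' a b \<longleftrightarrow> E (h a) (h b)"
  shows "graph_iso V E V' E'"
proof -
  let ?f = "inv_into V' h"
  have bf: "bij_betw ?f V V'" using bij_betw_inv_into[OF h] .
  have hf: "\<And>x. x \<in> V \<Longrightarrow> h (?f x) = x" using h f_inv_into_f bij_betw_imp_surj_on by metis
  have fV: "\<And>x. x \<in> V \<Longrightarrow> ?f x \<in> V'" using bf bij_betwE by blast
  have "\<forall>x\<in>V. \<forall>y\<in>V. E x y \<longleftrightarrow> E' (?f x) (?f y)"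
  proof (intro ballI)
    fix x y assume x: "x \<in> V" and y: "y \<in> V"
    have "E' (?f x) (?f y) \<longleftrightarrow> E (h (?f x)) (h (?f y))" using adj fV x y by blast
    thus "E x y \<longleftrightarrow> E' (?f x) (?f y)" using hf x y by simp
  qed
  thus ?thesis using bf unfolding graph_iso_def by blast
qed

lemma iso_Kmn:
  assumes fA: "finite A" and fB: "finite B" and dis: "A \<inter> B = {}" and un: "A \<union> B = V"
    and adj: "\<forall>v\<in>V. \<forall>w\<in>V. E v w \<longleftrightarrow> (v\<in>A \<and> w\<in>B) \<or> (v\<in>B \<and> w\<in>A)"
  shows "graph_iso V E (Kmn_V (card A) (card B)) (Kmn_E (card A) (card B))"
proof -
  obtain gA where gA: "bij_betw gA {..<card A} A"
    using ex_bij_betw_nat_finite[OF fA] atLeast0LessThan by auto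
  obtain gB where gB: "bij_betw gB {..<card B} B"
    using ex_bij_betw_nat_finite[OF fB] atLeast0LessThan by auto
  define h where "h = case_sum gA gB"
  have hl: "\<And>i. h (Inl i) = gA i" and hr: "\<And>j. h (Inr j) = gB j" by (simp_all add: h_def)
  have gAi: "\<And>i. i < card A \<Longrightarrow> gA i \<in> A" using gA bij_betwE by blast
  have gBi: "\<And>i. i < card B \<Longrightarrow> gB i \<in> B" using gB bij_betwE by blast
  have injA: "inj_on gA {..<card A}" using gA bij_betw_imp_inj_on by blast
  have injB: "inj_on gB {..<card B}" using gB bij_betw_imp_inj_on by blast
  have surjA: "gA ` {..<card A} = A" using gA bij_betw_imp_surj_on by blast
  have surjB: "gB ` {..<card B} = B" using gB bij_betw_imp_surj_on by blast
  have inj: "inj_on h (Kmn_V (card A) (card B))"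
  proof (rule inj_onI)
    fix u w assume u: "u \<in> Kmn_V (card A) (card B)" and w: "w \<in> Kmn_V (card A) (card B)"
      and e: "h u = h w"
    show "u = w"
    proof (cases u)
      case (Inl i)
      hence i: "i < card A" using u by (auto simp: Kmn_V_def)
      show ?thesis
      proof (cases w)
        case (Inl j)
        hence "j < card A" using w by (auto simp: Kmn_V_def)
        thus ?thesis using e i injA \<open>u = Inl i\<close> Inl hl by (simp add: inj_on_def)
      next
        case (Inr j)
        hence "j < card B" using w by (auto simp: Kmn_V_def)
        hence "gB j \<in> B" using gBi by blast
        moreover have "gA i \<in> A" using gAi i by blast
        ultimately show ?thesis using e \<open>u = Inl i\<close> Inr hl hr dis by auto
      qed
    next
      case (Inr i)
      hence i: "i < card B" using u by (auto simp: Kmn_V_def)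
      show ?thesis
      proof (cases w)
        case (Inl j)
        hence "j < card A" using w by (auto simp: Kmn_V_def)
        hence "gA j \<in> A" using gAi by blast
        moreover have "gB i \<in> B" using gBi i by blast
        ultimately show ?thesis using e \<open>u = Inr i\<close> Inl hl hr dis by auto
      next
        case (Inr j)
        hence "j < card B" using w by (auto simp: Kmn_V_def)
        thus ?thesis using e i injB \<open>u = Inr i\<close> Inr hr by (simp add: inj_on_def)
      qed
    qed
  qed
  have img: "h ` Kmn_V (card A) (card B) = V"
  proof -
    have "h ` Kmn_V (card A) (card B) = gA ` {..<card A} \<union> gB ` {..<card B}"
      unfolding Kmn_V_def image_Un image_image hl hr by simp
    thus ?thesis using surjA surjB un by simp
  qed
  have bij: "bij_betw h (Kmn_V (card A) (card B)) V" using inj img by (simp add: bij_betw_def)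
  have hA: "\<And>u. u \<in> Kmn_V (card A) (card B) \<Longrightarrow> h u \<in> A \<longleftrightarrow> (\<exists>i. u = Inl i)"
    using dis by (auto simp: Kmn_V_def hl hr disjoint_iff dest: gAi gBi)
  have hB: "\<And>u. u \<in> Kmn_V (card A) (card B) \<Longrightarrow> h u \<in> B \<longleftrightarrow> (\<exists>i. u = Inr i)"
    using dis by (auto simp: Kmn_V_def hl hr disjoint_iff dest: gAi gBi)
  have "\<forall>a\<in>Kmn_V (card A) (card B). \<forall>b\<in>Kmn_V (card A) (card B).
          Kmn_E (card A) (card B) a b \<longleftrightarrow> E (h a) (h b)"
  proof (intro ballI)
    fix a b assume a: "a \<in> Kmn_V (card A) (card B)" and b: "b \<in> Kmn_V (card A) (card B)"
    have ha: "h a \<in> V" and hb: "h b \<in> V" using img a b by auto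
    have "E (h a) (h b) \<longleftrightarrow> (h a\<in>A \<and> h b\<in>B) \<or> (h a\<in>B \<and> h b\<in>A)" using adj ha hb by blast
    also have "\<dots> \<longleftrightarrow> ((\<exists>i. a = Inl i) \<and> (\<exists>j. b = Inr j)) \<or> ((\<exists>j. a = Inr j) \<and> (\<exists>i. b = Inl i))"
      using hA[OF a] hA[OF b] hB[OF a] hB[OF b] by simp
    also have "\<dots> \<longleftrightarrow> Kmn_E (card A) (card B) a b" using a b unfolding Kmn_E_def by blast
    finally show "Kmn_E (card A) (card B) a b \<longleftrightarrow> E (h a) (h b)" by simp
  qed
  thus ?thesis using iso_inv[OF bij] by blast
qed

end

locale cisl = dfg +
  assumes cis: "CIS V E"
begin

lemma Dom:
  assumes T: "stable V E T" and K: "maximal_clique V E K" and dom: "\<forall>p\<in>K. \<exists>t\<in>T. E p t"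
  shows False
proof -
  obtain S where S: "maximal_stable V E S" "T \<subseteq> S" using ext_stable[OF T] by blast
  have "strong_clique V E K" using cis K by (simp add: CIS_def)
  hence "K \<inter> S \<noteq> {}" using S(1) by (simp add: strong_clique_def)
  then obtain p where p: "p \<in> K" "p \<in> S" by blast
  obtain t where t: "t \<in> T" "E p t" using dom p(1) by blast
  have "stable V E S" using S(1) ms_stable by blast
  thus False using p t S(2) unfolding stable_def by blast
qed

lemma cis_meet: "maximal_clique V E K \<Longrightarrow> maximal_stable V E S \<Longrightarrow> K \<inter> S \<noteq> {}"
  using cis by (simp add: CIS_def strong_clique_def)

lemma R1:
  assumes K: "maximal_clique V E K" and nsK: "\<forall>w\<in>K. \<not> simplicial_vertex V E w"
    and x: "x \<in> K" and xb: "E x b" and bK: "b \<notin> K"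
  shows "\<not> simplicial_vertex V E b"
proof
  assume sb: "simplicial_vertex V E b"
  have xV: "x \<in> V" using mc_sub[OF K] x by auto
  have "stable V E {x}" using xV irrE by (simp add: stable_def)
  then obtain S where S: "maximal_stable V E S" "x \<in> S" using ext_stable by blast
  have stS: "stable V E S" using S(1) ms_stable by blast
  have cover: "\<forall>y\<in>K. y \<noteq> x \<longrightarrow> (\<exists>s\<in>S. s \<noteq> x \<and> E y s)"
  proof (intro ballI impI)
    fix y assume y: "y \<in> K" "y \<noteq> x"
    obtain a where a: "E y a" "a \<notin> K" using nonsimp_out[OF K y(1)] nsK y(1) by blast
    obtain Q where Q: "maximal_clique V E Q" "{y,a} \<subseteq> Q"
      using ext_clique[OF clique_pair[OF a(1)]] by blast
    obtain s where s: "s \<in> Q" "s \<in> S" using cis_meet[OF Q(1) S(1)] by blast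
    have yx: "E y x" using mc_adj[OF K y(1) x y(2)] .
    have yS: "y \<notin> S" using yx S(2) stS unfolding stable_def by blast
    have xQ: "x \<notin> Q"
    proof
      assume xQ: "x \<in> Q"
      have "a \<noteq> x" using a(2) x by auto
      hence "E a x" using mc_adj[OF Q(1)] xQ Q(2) by auto
      moreover have "E a y" using symE[OF a(1)] .
      ultimately have "x = y" using F1[OF K a(2) x y(1)] by blast
      thus False using y(2) by simp
    qed
    have "s \<noteq> y" using s yS by auto
    moreover have "s \<noteq> x" using s xQ by auto
    moreover have "E y s" using mc_adj[OF Q(1)] Q(2) s(1) calculation(1) by auto
    ultimately show "\<exists>s\<in>S. s \<noteq> x \<and> E y s" using s(2) by blast
  qed
  show False
  proof (cases "\<exists>s\<in>S. s \<noteq> x \<and> E b s")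
    case True
    then obtain s where s: "s \<in> S" "s \<noteq> x" "E b s" by blast
    have "x \<in> closed_nbhd V E b" using symE[OF xb] xV by (auto simp: closed_nbhd_def)
    moreover have "s \<in> closed_nbhd V E b" using s inV2 by (auto simp: closed_nbhd_def)
    moreover have cl: "clique V E (closed_nbhd V E b)" using sb by (simp add: simplicial_vertex_def)
    moreover have "x \<noteq> s" using s(2) by simp
    ultimately have "E x s" unfolding clique_def by blast
    thus False using stS S(2) s(1) unfolding stable_def by blast
  next
    case False
    have bV: "b \<in> V" using inV2[OF xb] .
    have nb: "\<forall>s\<in>S - {x}. \<not> E b s \<and> \<not> E s b" using False symE by blast
    have "stable V E (insert b (S - {x}))"
      using stS nb bV irrE unfolding stable_def by auto
    moreover have "\<forall>p\<in>K. \<exists>t\<in>insert b (S - {x}). E p t"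
    proof
      fix p assume p: "p \<in> K"
      show "\<exists>t\<in>insert b (S - {x}). E p t"
      proof (cases "p = x")
        case True thus ?thesis using xb by blast
      next
        case False thus ?thesis using cover p by blast
      qed
    qed
    ultimately show False using Dom K by blast
  qed
qed

definition good :: "'a \<Rightarrow> bool" where
  "good v \<longleftrightarrow> (\<forall>K. maximal_clique V E K \<and> v \<in> K \<longrightarrow> (\<forall>w\<in>K. \<not> simplicial_vertex V E w))"

lemma good_from:
  assumes K0: "maximal_clique V E K0" and ns0: "\<forall>w\<in>K0. \<not> simplicial_vertex V E w" and w: "w \<in> K0"
  shows "good w"
  unfolding good_def
proof (intro allI impI ballI)
  fix Q z assume Q: "maximal_clique V E Q \<and> w \<in> Q" and z: "z \<in> Q"
  show "\<not> simplicial_vertex V E z"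
  proof (cases "z \<in> K0")
    case True thus ?thesis using ns0 by blast
  next
    case False
    hence "z \<noteq> w" using w by auto
    hence "E w z" using mc_adj Q z by blast
    thus ?thesis using R1[OF K0 ns0 w _ False] by blast
  qed
qed

lemma good_step:
  assumes g: "good v" and e: "E v w" shows "good w"
proof -
  obtain K0 where K0: "maximal_clique V E K0" "{v,w} \<subseteq> K0"
    using ext_clique[OF clique_pair[OF e]] by blast
  have "\<forall>z\<in>K0. \<not> simplicial_vertex V E z" using g K0 unfolding good_def by blast
  thus ?thesis using good_from[OF K0(1)] K0(2) by blast
qed

lemma all_ns:
  assumes con: "connected_graph V E" and K0: "maximal_clique V E K0"
    and ns0: "\<forall>w\<in>K0. \<not> simplicial_vertex V E w"
  shows "\<forall>v\<in>V. \<not> simplicial_vertex V E v"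
proof
  fix v assume v: "v \<in> V"
  have "K0 \<noteq> {}"
  proof
    assume "K0 = {}"
    hence "{v} = K0" using K0 clique_single[OF v] unfolding maximal_clique_def by blast
    thus False using \<open>K0 = {}\<close> by simp
  qed
  then obtain v0 where v0: "v0 \<in> K0" by blast
  have g0: "good v0" using good_from[OF K0 ns0 v0] .
  have "v0 \<in> V" using mc_sub[OF K0] v0 by auto
  hence "E\<^sup>*\<^sup>* v0 v" using con v unfolding connected_graph_def by blast
  hence "good v"
  proof (induction rule: rtranclp_induct)
    case base show ?case using g0 .
  next
    case (step y z) thus ?case using good_step by blast
  qed
  moreover obtain Q where "maximal_clique V E Q" "{v} \<subseteq> Q"
    using ext_clique[OF clique_single[OF v]] by blast
  ultimately show "\<not> simplicial_vertex V E v" unfolding good_def by blast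
qed

lemma K2:
  assumes K: "maximal_clique V E {s,t}" and st: "s \<noteq> t"
    and sa: "E s a" and at: "a \<noteq> t" and tb: "E t b" and bs: "b \<noteq> s"
  shows "E a b"
proof (rule ccontr)
  assume nab: "\<not> E a b"
  have aK: "a \<notin> {s,t}" using at neqE[OF sa] by auto
  have bK: "b \<notin> {s,t}" using bs neqE[OF tb] by auto
  have "a \<noteq> b"
  proof
    assume "a = b"
    hence "E a s" "E a t" using symE[OF sa] symE[OF tb] \<open>a = b\<close> by auto
    hence "s = t" using F1[OF K aK, of s t] by simp
    thus False using st by simp
  qed
  have nba: "\<not> E b a" using nab symE by blast
  have "stable V E {a,b}" using nab nba inV2[OF sa] inV2[OF tb] irrE
    unfolding stable_def by auto
  moreover have "\<forall>p\<in>{s,t}. \<exists>q\<in>{a,b}. E p q" using sa tb by blast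
  ultimately show False using Dom[OF _ K] by blast
qed

end


locale nsl = cisl +
  assumes nsall: "\<forall>v\<in>V. \<not> simplicial_vertex V E v"
    and con: "connected_graph V E"
begin

lemma ns_out: "maximal_clique V E K \<Longrightarrow> v \<in> K \<Longrightarrow> \<exists>u. E v u \<and> u \<notin> K"
  using nonsimp_out nsall mc_sub by blast

lemma A_ne:
  assumes K: "maximal_clique V E {x,y}"
  shows "\<exists>a. E x a \<and> a \<noteq> y"
  using ns_out[OF K, of x] by auto

lemma A_ny:
  assumes K: "maximal_clique V E {x,y}" and xy: "x \<noteq> y" and xa: "E x a" and ay: "a \<noteq> y"
  shows "\<not> E a y"
proof
  assume ay': "E a y"
  have aK: "a \<notin> {x,y}" using ay neqE[OF xa] by auto
  have "x = y" using F1[OF K aK, of x y] symE[OF xa] ay' by simp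
  thus False using xy by simp
qed

lemma A_cross:
  assumes K: "maximal_clique V E {x,y}" and xy: "x \<noteq> y" and xa: "E x a" and ay: "a \<noteq> y"
    and yb: "E y b" and bx: "b \<noteq> x"
  shows "E a b"
  using K2[OF K xy xa ay yb bx] .

lemma A_stab:
  assumes K: "maximal_clique V E {x,y}" and xy: "x \<noteq> y" and xa: "E x a" and ay: "a \<noteq> y"
    and xa': "E x a'" and ay': "a' \<noteq> y"
  shows "\<not> E a a'"
proof
  assume aa: "E a a'"
  have K': "maximal_clique V E {y,x}" using K by (simp add: insert_commute)
  obtain b where b: "E y b" "b \<noteq> x" using A_ne[OF K'] by blast
  have ab: "E a b" using A_cross[OF K xy xa ay b] .
  have ab': "E a' b" using A_cross[OF K xy xa' ay' b] .
  have nbx: "\<not> E b x" using A_ny[OF K' xy[symmetric] b] .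
  have nxb: "\<not> E x b" using nbx symE by blast
  have d: "distinct [a,a',x,b]" using neqE[OF aa] neqE[OF xa] neqE[OF xa'] neqE[OF ab] neqE[OF ab'] b(2)
    by auto
  have V4: "a \<in> V" "a' \<in> V" "x \<in> V" "b \<in> V" using inV1 inV2 xa xa' b(1) by auto
  show False using nodiamond[OF V4] d aa symE[OF xa] symE[OF xa'] ab ab' nxb by simp
qed

lemma A_maxpair:
  assumes K: "maximal_clique V E {x,y}" and xy: "x \<noteq> y" and yb: "E y b" and bx: "b \<noteq> x"
  shows "maximal_clique V E {b,y}"
proof -
  have K': "maximal_clique V E {y,x}" using K by (simp add: insert_commute)
  have cl: "clique V E {b,y}" using clique_pair[OF symE[OF yb]] .
  have "\<forall>C. clique V E C \<and> {b,y} \<subseteq> C \<longrightarrow> C = {b,y}"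
  proof (intro allI impI)
    fix C assume C: "clique V E C \<and> {b,y} \<subseteq> C"
    have "C \<subseteq> {b,y}"
    proof
      fix t assume t: "t \<in> C"
      show "t \<in> {b,y}"
      proof (rule ccontr)
        assume tn: "t \<notin> {b,y}"
        have "E y t" using C t tn unfolding clique_def by auto
        have "E t b" using C t tn unfolding clique_def by auto
        show False
        proof (cases "t = x")
          case True
          hence "E b x" using \<open>E t b\<close> symE by blast
          thus False using A_ny[OF K' xy[symmetric] yb bx] by simp
        next
          case False
          thus False using A_stab[OF K' xy[symmetric] \<open>E y t\<close> False yb bx] \<open>E t b\<close> by simp
        qed
      qed
    qed
    thus "C = {b,y}" using C by blast
  qed
  thus ?thesis using cl unfolding maximal_clique_def by blast
qed

lemma A_close:
  assumes K: "maximal_clique V E {x,y}" and xy: "x \<noteq> y"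
    and v: "v = x \<or> (E y v \<and> v \<noteq> x)" and vz: "E v z"
  shows "z = y \<or> (E x z \<and> z \<noteq> y)"
proof (cases "v = x")
  case True thus ?thesis using vz by auto
next
  case False
  hence yv: "E y v" and vx: "v \<noteq> x" using v by auto
  show ?thesis
  proof (cases "z = y")
    case True thus ?thesis by simp
  next
    case zy: False
    have K': "maximal_clique V E {v,y}" using A_maxpair[OF K xy yv vx] .
    have vy: "v \<noteq> y" using neqE[OF yv] by auto
    have "E y x" using mc_adj[OF K] xy by auto
    hence "E z x" using K2[OF K' vy vz zy _ vx[symmetric]] by blast
    thus ?thesis using symE zy by blast
  qed
qed

lemma caseA:
  assumes K: "maximal_clique V E {x,y}" and xy: "x \<noteq> y"
  shows "\<exists>m n. m \<ge> 2 \<and> n \<ge> 2 \<and> graph_iso V E (Kmn_V m n) (Kmn_E m n)"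
proof -
  have K': "maximal_clique V E {y,x}" using K by (simp add: insert_commute)
  define Ay where "Ay = {b. E y b \<and> b \<noteq> x}"
  define Ax where "Ax = {a. E x a \<and> a \<noteq> y}"
  define L0 where "L0 = insert x Ay"
  define R0 where "R0 = insert y Ax"
  have xV: "x \<in> V" and yV: "y \<in> V" using mc_sub[OF K] by auto
  have L0V: "L0 \<subseteq> V" using xV inV2 by (auto simp: L0_def Ay_def)
  have R0V: "R0 \<subseteq> V" using yV inV2 by (auto simp: R0_def Ax_def)
  have c1: "\<And>v z. v \<in> L0 \<Longrightarrow> E v z \<Longrightarrow> z \<in> R0"
    using A_close[OF K xy] by (auto simp: L0_def R0_def Ay_def Ax_def)
  have c2: "\<And>v z. v \<in> R0 \<Longrightarrow> E v z \<Longrightarrow> z \<in> L0"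
    using A_close[OF K' xy[symmetric]] by (auto simp: L0_def R0_def Ay_def Ax_def)
  have cov: "V \<subseteq> L0 \<union> R0"
  proof
    fix v assume v: "v \<in> V"
    have "E\<^sup>*\<^sup>* x v" using con xV v unfolding connected_graph_def by blast
    thus "v \<in> L0 \<union> R0"
    proof (induction rule: rtranclp_induct)
      case base show ?case by (simp add: L0_def)
    next
      case (step a b) thus ?case using c1 c2 by blast
    qed
  qed
  have un: "L0 \<union> R0 = V" using cov L0V R0V by blast
  have dis: "L0 \<inter> R0 = {}"
  proof (rule ccontr)
    assume "L0 \<inter> R0 \<noteq> {}"
    then obtain t where t: "t \<in> L0" "t \<in> R0" by blast
    show False
    proof (cases "t = x")
      case True
      thus False using t(2) xy irrE by (auto simp: R0_def Ax_def)
    next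
      case tx: False
      hence yt: "E y t" using t(1) by (auto simp: L0_def Ay_def)
      show False
      proof (cases "t = y")
        case True thus False using yt irrE by simp
      next
        case False
        hence xt: "E x t" using t(2) by (auto simp: R0_def Ax_def)
        have "t \<notin> {x,y}" using tx False by simp
        hence "x = y" using F1[OF K, of t x y] symE[OF xt] symE[OF yt] by simp
        thus False using xy by simp
      qed
    qed
  qed
  have adj: "\<forall>v\<in>V. \<forall>w\<in>V. E v w \<longleftrightarrow> (v\<in>L0 \<and> w\<in>R0) \<or> (v\<in>R0 \<and> w\<in>L0)"
  proof (intro ballI iffI)
    fix v w assume v: "v \<in> V" and w: "w \<in> V" and e: "E v w"
    show "(v\<in>L0 \<and> w\<in>R0) \<or> (v\<in>R0 \<and> w\<in>L0)" using cov v c1[OF _ e] c2[OF _ e] by blast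
  next
    have one: "\<And>v w. v\<in>L0 \<Longrightarrow> w\<in>R0 \<Longrightarrow> E v w"
    proof -
      fix v w assume v: "v \<in> L0" and w: "w \<in> R0"
      show "E v w"
      proof (cases "v = x")
        case True
        thus ?thesis using w mc_adj[OF K] xy by (auto simp: R0_def Ax_def)
      next
        case vx: False
        hence yv: "E y v" "v \<noteq> x" using v by (auto simp: L0_def Ay_def)
        show ?thesis
        proof (cases "w = y")
          case True thus ?thesis using symE[OF yv(1)] by simp
        next
          case False
          hence "E x w" "w \<noteq> y" using w by (auto simp: R0_def Ax_def)
          hence "E w v" using A_cross[OF K xy _ _ yv] by blast
          thus ?thesis using symE by blast
        qed
      qed
    qed
    fix v w assume "v \<in> V" "w \<in> V" and h: "(v\<in>L0 \<and> w\<in>R0) \<or> (v\<in>R0 \<and> w\<in>L0)"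
    thus "E v w" using one symE by blast
  qed
  have fL: "finite L0" and fR: "finite R0" using L0V R0V finV finite_subset by blast+
  have "card L0 \<ge> 2"
  proof -
    obtain b where b: "E y b" "b \<noteq> x" using A_ne[OF K'] by blast
    have "{x,b} \<subseteq> L0" using b by (auto simp: L0_def Ay_def)
    hence "card {x,b} \<le> card L0" using card_mono fL by blast
    thus ?thesis using b(2) by simp
  qed
  moreover have "card R0 \<ge> 2"
  proof -
    obtain a where a: "E x a" "a \<noteq> y" using A_ne[OF K] by blast
    have "{y,a} \<subseteq> R0" using a by (auto simp: R0_def Ax_def)
    hence "card {y,a} \<le> card R0" using card_mono fR by blast
    thus ?thesis using a(2) by simp
  qed
  moreover have "graph_iso V E (Kmn_V (card L0) (card R0)) (Kmn_E (card L0) (card R0))"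
    using iso_Kmn[OF fL fR dis un adj] .
  ultimately show ?thesis by blast
qed

end


locale mk = nsl +
  fixes k :: nat
  assumes kmin: "\<forall>K. maximal_clique V E K \<longrightarrow> k \<le> card K"
    and k3: "3 \<le> k"
begin

lemma stable_sub: "stable V E U \<Longrightarrow> U \<subseteq> V" by (simp add: stable_def)
lemma stable_fin: "stable V E U \<Longrightarrow> finite U" using stable_sub finV finite_subset by blast

lemma Ext1:
  assumes L: "maximal_clique V E L" and U: "stable V E U" and UL: "U \<inter> L = {}"
    and p: "p \<in> L" and np: "\<forall>u\<in>U. \<not> E u p" and cU: "card U + 2 \<le> k"
  shows "\<exists>y. y \<in> V \<and> y \<notin> L \<and> E y p \<and> y \<notin> U \<and> (\<forall>u\<in>U. \<not> E u y \<and> \<not> E y u)"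
proof -
  obtain u0 where u0: "E p u0" "u0 \<notin> L" using ns_out[OF L p] by blast
  obtain Y where Y: "maximal_clique V E Y" "{p,u0} \<subseteq> Y" using ext_clique[OF clique_pair[OF u0(1)]] by blast
  have YL: "Y \<noteq> L" using Y u0 by auto
  have cY: "k \<le> card Y" using kmin Y(1) by blast
  have fU: "finite U" using stable_fin[OF U] .
  have fY: "finite Y" using mc_fin[OF Y(1)] .
  let ?Bad = "{y\<in>Y. \<exists>u\<in>U. E u y}"
  have uY: "\<And>u. u \<in> U \<Longrightarrow> u \<notin> Y"
  proof
    fix u assume u: "u \<in> U" "u \<in> Y"
    have "u \<noteq> p" using u UL p by auto
    hence "E u p" using mc_adj[OF Y(1) u(2)] Y(2) by auto
    thus False using np u by blast
  qed
  have "?Bad = (\<Union>u\<in>U. {y\<in>Y. E u y})" by blast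
  hence "card ?Bad \<le> (\<Sum>u\<in>U. card {y\<in>Y. E u y})" using card_UN_le[OF fU] by simp
  also have "\<dots> \<le> (\<Sum>u\<in>U. 1)" using card_nbr_le1[OF Y(1)] uY by (intro sum_mono) auto
  finally have cB: "card ?Bad \<le> card U" by simp
  have "card (Y - {p}) = card Y - 1" using Y(2) fY by simp
  hence "card ?Bad < card (Y - {p})" using cB cU cY by simp
  hence "\<not> Y - {p} \<subseteq> ?Bad" using card_mono[of ?Bad "Y - {p}"] fY by fastforce
  then obtain y where y: "y \<in> Y" "y \<noteq> p" "y \<notin> ?Bad" by blast
  have yL: "y \<notin> L" using mc_inter[OF Y(1) L YL, of y p] y Y(2) p by auto
  have yp: "E y p" using mc_adj[OF Y(1) y(1)] Y(2) y(2) by auto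
  have yU: "y \<notin> U" using yp np by blast
  have nU: "\<forall>u\<in>U. \<not> E u y \<and> \<not> E y u" using y(1,3) symE by blast
  show ?thesis using yL yp yU nU mc_sub[OF Y(1)] y(1) by blast
qed

lemma Ext:
  assumes L: "maximal_clique V E L" and fP: "finite P" and PL: "P \<subseteq> L"
  shows "\<forall>U. stable V E U \<and> U \<inter> L = {} \<and> (\<forall>u\<in>U. \<forall>p\<in>P. \<not> E u p) \<and> card U + card P + 1 \<le> k \<longrightarrow>
     (\<exists>U'. U \<subseteq> U' \<and> stable V E U' \<and> U' \<inter> L = {} \<and> card U' \<le> card U + card P
        \<and> (\<forall>p\<in>P. \<exists>u\<in>U'. E u p) \<and> (\<forall>u\<in>U'-U. \<exists>p\<in>P. E u p))"
  using fP PL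
proof (induction P rule: finite_induct)
  case empty thus ?case by auto
next
  case (insert p P)
  show ?case
  proof (intro allI impI)
    fix U assume H: "stable V E U \<and> U \<inter> L = {} \<and> (\<forall>u\<in>U. \<forall>q\<in>insert p P. \<not> E u q) \<and> card U + card (insert p P) + 1 \<le> k"
    have cP: "card (insert p P) = Suc (card P)" using insert.hyps by simp
    have pre: "stable V E U \<and> U \<inter> L = {} \<and> (\<forall>u\<in>U. \<forall>q\<in>P. \<not> E u q) \<and> card U + card P + 1 \<le> k"
      using H cP by simp
    have IH: "\<forall>U. stable V E U \<and> U \<inter> L = {} \<and> (\<forall>u\<in>U. \<forall>p\<in>P. \<not> E u p) \<and> card U + card P + 1 \<le> k \<longrightarrow>
     (\<exists>U'. U \<subseteq> U' \<and> stable V E U' \<and> U' \<inter> L = {} \<and> card U' \<le> card U + card P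
        \<and> (\<forall>p\<in>P. \<exists>u\<in>U'. E u p) \<and> (\<forall>u\<in>U'-U. \<exists>p\<in>P. E u p))"
      using insert.IH insert.prems by simp
    obtain U1 where U1: "U \<subseteq> U1" "stable V E U1" "U1 \<inter> L = {}" "card U1 \<le> card U + card P"
        "\<forall>q\<in>P. \<exists>u\<in>U1. E u q" "\<forall>u\<in>U1-U. \<exists>q\<in>P. E u q"
      using IH[rule_format, OF pre] by blast
    have pL: "p \<in> L" using insert.prems by simp
    have np: "\<forall>u\<in>U1. \<not> E u p"
    proof
      fix u assume u: "u \<in> U1"
      show "\<not> E u p"
      proof (cases "u \<in> U")
        case True thus ?thesis using H by blast
      next
        case False
        then obtain q where q: "q \<in> P" "E u q" using U1(6) u by blast
        have uL: "u \<notin> L" using U1(3) u by blast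
        have qL: "q \<in> L" using insert.prems q by blast
        show ?thesis
        proof
          assume "E u p"
          hence "p = q" using F1[OF L uL pL qL] q(2) by blast
          thus False using q(1) insert.hyps by blast
        qed
      qed
    qed
    have "card U1 + 2 \<le> k" using U1(4) H cP by simp
    then obtain y where y: "y \<in> V" "y \<notin> L" "E y p" "y \<notin> U1" "\<forall>u\<in>U1. \<not> E u y \<and> \<not> E y u"
      using Ext1[OF L U1(2) U1(3) pL np] by blast
    let ?U' = "insert y U1"
    have fU1: "finite U1" using stable_fin[OF U1(2)] .
    have s1: "stable V E ?U'" using U1(2) y irrE unfolding stable_def by auto
    have s2: "?U' \<inter> L = {}" using U1(3) y(2) by auto
    have s3: "card ?U' \<le> card U + card (insert p P)" using U1(4) fU1 y(4) cP by simp
    have s4: "\<forall>q\<in>insert p P. \<exists>u\<in>?U'. E u q" using U1(5) y(3) by blast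
    have s5: "\<forall>u\<in>?U'-U. \<exists>q\<in>insert p P. E u q" using U1(6) y(3) by blast
    have s0: "U \<subseteq> ?U'" using U1(1) by blast
    show "\<exists>U'. U \<subseteq> U' \<and> stable V E U' \<and> U' \<inter> L = {} \<and> card U' \<le> card U + card (insert p P)
        \<and> (\<forall>q\<in>insert p P. \<exists>u\<in>U'. E u q) \<and> (\<forall>u\<in>U'-U. \<exists>q\<in>insert p P. E u q)"
      by (rule exI[of _ "?U'"], intro conjI s0 s1 s2 s3 s4 s5)
  qed
qed

end


context mk begin

lemma out_not_adj:
  assumes L: "maximal_clique V E L" and uL: "u \<notin> L" and p: "p \<in> L" and q: "q \<in> L"
    and pq: "p \<noteq> q" and up: "E u p"
  shows "\<not> E u q"
  using F1[OF L uL p q up] pq by blast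

lemma Free:
  assumes L: "maximal_clique V E L" and cL: "card L = k" and x: "x \<in> L"
    and R: "maximal_clique V E R" and xR: "x \<in> R" and RL: "R \<noteq> L"
    and U0: "stable V E U0" and U0L: "U0 \<inter> L = {}" and nx: "\<forall>u\<in>U0. \<not> E u x"
    and cU: "card U0 \<le> card {p\<in>L. \<exists>u\<in>U0. E u p}"
    and ineq: "card {r\<in>R. r \<noteq> x \<and> (\<exists>u\<in>U0. E u r)} + (k - 1 - card {p\<in>L. \<exists>u\<in>U0. E u p}) < card R - 1"
  shows False
proof -
  let ?D = "{p\<in>L. \<exists>u\<in>U0. E u p}"
  let ?P = "L - {x} - ?D"
  have fL: "finite L" using mc_fin[OF L] .
  have fR: "finite R" using mc_fin[OF R] .
  have Dsub: "?D \<subseteq> L - {x}" using nx by auto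
  have cLx: "card (L - {x}) = k - 1" using cL x fL by simp
  have cD: "card ?D \<le> k - 1" using card_mono[OF _ Dsub] fL cLx by simp
  have cP: "card ?P = k - 1 - card ?D"
    using card_Diff_subset[of ?D "L - {x}"] Dsub fL cLx finite_subset by (metis finite_Diff)
  have fP: "finite ?P" using fL by simp
  have PL: "?P \<subseteq> L" by blast
  have pre: "stable V E U0 \<and> U0 \<inter> L = {} \<and> (\<forall>u\<in>U0. \<forall>p\<in>?P. \<not> E u p) \<and> card U0 + card ?P + 1 \<le> k"
    using U0 U0L cU cP cD k3 by auto
  obtain U' where U': "U0 \<subseteq> U'" "stable V E U'" "U' \<inter> L = {}" "card U' \<le> card U0 + card ?P"
      "\<forall>p\<in>?P. \<exists>u\<in>U'. E u p" "\<forall>u\<in>U'-U0. \<exists>p\<in>?P. E u p"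
    using Ext[OF L fP PL, rule_format, OF pre] by blast
  have fU': "finite U'" using stable_fin[OF U'(2)] .
  have nx': "\<forall>u\<in>U'. \<not> E u x"
  proof
    fix u assume u: "u \<in> U'"
    show "\<not> E u x"
    proof (cases "u \<in> U0")
      case True thus ?thesis using nx by blast
    next
      case False
      then obtain q where q: "q \<in> ?P" "E u q" using U'(6) u by blast
      have uL: "u \<notin> L" using U'(3) u by blast
      show ?thesis using out_not_adj[OF L uL _ x _ q(2)] q(1) by blast
    qed
  qed
  have domall: "\<forall>p\<in>L. p \<noteq> x \<longrightarrow> (\<exists>u\<in>U'. E u p)"
  proof (intro ballI impI)
    fix p assume p: "p \<in> L" "p \<noteq> x"
    show "\<exists>u\<in>U'. E u p"
    proof (cases "p \<in> ?D")
      case True thus ?thesis using U'(1) by blast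
    next
      case False thus ?thesis using U'(5) p by blast
    qed
  qed
  have uR: "\<And>u. u \<in> U' \<Longrightarrow> u \<notin> R"
  proof
    fix u assume u: "u \<in> U'" "u \<in> R"
    have "u \<noteq> x" using u(1) U'(3) x by blast
    hence "E u x" using mc_adj[OF R u(2) xR] by blast
    thus False using nx' u(1) by blast
  qed
  let ?K0 = "{r\<in>R. r \<noteq> x \<and> (\<exists>u\<in>U0. E u r)}"
  let ?K' = "{r\<in>R. r \<noteq> x \<and> (\<exists>u\<in>U'. E u r)}"
  have sub: "?K' \<subseteq> ?K0 \<union> (\<Union>u\<in>U'-U0. {r\<in>R. E u r})" by blast
  have fU'': "finite (U' - U0)" using fU' by simp
  have "card (\<Union>u\<in>U'-U0. {r\<in>R. E u r}) \<le> (\<Sum>u\<in>U'-U0. card {r\<in>R. E u r})"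
    by (rule card_UN_le[OF fU''])
  also have "\<dots> \<le> (\<Sum>u\<in>U'-U0. 1)" using card_nbr_le1[OF R] uR by (intro sum_mono) auto
  finally have c1: "card (\<Union>u\<in>U'-U0. {r\<in>R. E u r}) \<le> card (U' - U0)" by simp
  have c2: "card (U' - U0) \<le> card ?P" using U'(4) U'(1) fU' card_Diff_subset[of U0 U'] finite_subset by fastforce
  have "card ?K' \<le> card (?K0 \<union> (\<Union>u\<in>U'-U0. {r\<in>R. E u r}))"
    by (rule card_mono[OF _ sub]) (use fR fU'' in auto)
  also have "\<dots> \<le> card ?K0 + card (\<Union>u\<in>U'-U0. {r\<in>R. E u r})" using card_Un_le by blast
  finally have cK: "card ?K' < card R - 1" using c1 c2 cP ineq by linarith
  have cRx: "card (R - {x}) = card R - 1" using xR fR by simp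
  have "\<not> R - {x} \<subseteq> ?K'"
  proof
    assume "R - {x} \<subseteq> ?K'"
    hence "card (R - {x}) \<le> card ?K'" by (intro card_mono) (use fR in auto)
    thus False using cK cRx by linarith
  qed
  then obtain f where f: "f \<in> R" "f \<noteq> x" "f \<notin> ?K'" by blast
  have nf: "\<forall>u\<in>U'. \<not> E u f" using f by blast
  have nf2: "\<forall>u\<in>U'. \<not> E f u" using nf symE by blast
  have fU: "f \<notin> U'"
  proof
    assume "f \<in> U'"
    moreover have "E f x" using mc_adj[OF R f(1) xR f(2)] .
    ultimately show False using nx' by blast
  qed
  have fV: "f \<in> V" using mc_sub[OF R] f(1) by blast
  have T: "stable V E (insert f U')" using U'(2) nf nf2 fV irrE unfolding stable_def by auto
  have "\<forall>p\<in>L. \<exists>t\<in>insert f U'. E p t"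
  proof
    fix p assume p: "p \<in> L"
    show "\<exists>t\<in>insert f U'. E p t"
    proof (cases "p = x")
      case True
      thus ?thesis using mc_adj[OF R xR f(1)] f(2) by auto
    next
      case False
      then obtain u where "u \<in> U'" "E u p" using domall p by blast
      thus ?thesis using symE by blast
    qed
  qed
  thus False using Dom[OF T L] by blast
qed

lemma B1:
  assumes L: "maximal_clique V E L" and cL: "card L = k" and x: "x \<in> L"
    and R: "maximal_clique V E R" and xR: "x \<in> R" and RL: "R \<noteq> L"
  shows "card R = k"
proof (rule ccontr)
  assume "card R \<noteq> k"
  hence gt: "k < card R" using kmin R by fastforce
  have st: "stable V E {}" by (simp add: stable_def)
  show False using Free[OF L cL x R xR RL st] gt k3 by (simp, arith)
qed

lemma B3:
  assumes L: "maximal_clique V E L" and cL: "card L = k" and p: "p \<in> L" and q: "q \<in> L"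
    and pq: "p \<noteq> q" and pu: "E p u" and uL: "u \<notin> L"
    and R: "maximal_clique V E R" and qR: "q \<in> R" and RL: "R \<noteq> L"
  shows "\<exists>w\<in>R. w \<noteq> q \<and> E u w"
proof (rule ccontr)
  assume H: "\<not> ?thesis"
  have up: "E u p" using symE[OF pu] .
  have uV: "u \<in> V" using inV2[OF pu] .
  have st: "stable V E {u}" using uV irrE by (simp add: stable_def)
  have nq: "\<forall>v\<in>{u}. \<not> E v q" using out_not_adj[OF L uL p q pq up] by simp
  have D: "{p'\<in>L. \<exists>v\<in>{u}. E v p'} = {p}"
    using F1[OF L uL] up p by auto
  have K: "{r\<in>R. r \<noteq> q \<and> E u r} = {}" using H by auto
  have cR: "k \<le> card R" using kmin R by blast
  show False
    using Free[OF L cL q R qR RL st _ nq] D K uL cR k3 by (simp, arith)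
qed

lemma two_elems:
  assumes "finite A" "2 \<le> card A"
  shows "\<exists>a b. a \<in> A \<and> b \<in> A \<and> a \<noteq> b"
proof (rule ccontr)
  assume "\<not> ?thesis"
  hence "\<forall>a1\<in>A. \<forall>a2\<in>A. a1 = a2" by blast
  hence "card A \<le> Suc 0" using card_le_Suc0_iff_eq[OF assms(1)] by blast
  thus False using assms(2) by simp
qed

lemma Free2:
  assumes L: "maximal_clique V E L" and cL: "card L = k" and x: "x \<in> L"
    and R: "maximal_clique V E R" and xR: "x \<in> R" and RL: "R \<noteq> L"
    and p1: "p1 \<in> L" and p2: "p2 \<in> L" and d: "p1 \<noteq> x" "p2 \<noteq> x" "p1 \<noteq> p2"
    and u1: "E u1 p1" "u1 \<notin> L" and w: "E w p2" "w \<notin> L" and nuw: "\<not> E u1 w"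
    and r: "r \<in> R" "E u1 r" "E w r"
  shows False
proof -
  have u1x: "\<not> E u1 x" using out_not_adj[OF L u1(2) p1 x d(1) u1(1)] .
  have wx: "\<not> E w x" using out_not_adj[OF L w(2) p2 x d(2) w(1)] .
  have u1w: "u1 \<noteq> w" using out_not_adj[OF L u1(2) p1 p2 d(3) u1(1)] w(1) by blast
  have u1R: "u1 \<notin> R"
  proof
    assume "u1 \<in> R"
    moreover have "u1 \<noteq> x" using u1(2) x by blast
    ultimately show False using mc_adj[OF R _ xR] u1x by blast
  qed
  have wR: "w \<notin> R"
  proof
    assume "w \<in> R"
    moreover have "w \<noteq> x" using w(2) x by blast
    ultimately show False using mc_adj[OF R _ xR] wx by blast
  qed
  let ?U = "{u1, w}"
  have V2: "u1 \<in> V" "w \<in> V" using inV1 u1(1) w(1) by auto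
  have nwu: "\<not> E w u1" using nuw symE by blast
  have st: "stable V E ?U" using V2 nuw nwu irrE by (auto simp: stable_def)
  have UL: "?U \<inter> L = {}" using u1(2) w(2) by auto
  have nx: "\<forall>u\<in>?U. \<not> E u x" using u1x wx by auto
  have Dsup: "{p1, p2} \<subseteq> {p\<in>L. \<exists>u\<in>?U. E u p}" using p1 p2 u1(1) w(1) by auto
  have fD: "finite {p\<in>L. \<exists>u\<in>?U. E u p}" using mc_fin[OF L] by simp
  have cD: "2 \<le> card {p\<in>L. \<exists>u\<in>?U. E u p}"
    using card_mono[OF fD Dsup] d(3) by simp
  have cU: "card ?U \<le> card {p\<in>L. \<exists>u\<in>?U. E u p}" using cD u1w by simp
  have Ksub: "{r'\<in>R. r' \<noteq> x \<and> (\<exists>u\<in>?U. E u r')} \<subseteq> {r}"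
  proof
    fix r' assume r': "r' \<in> {r'\<in>R. r' \<noteq> x \<and> (\<exists>u\<in>?U. E u r')}"
    hence r'R: "r' \<in> R" and dj: "E u1 r' \<or> E w r'" by auto
    from dj show "r' \<in> {r}"
    proof
      assume "E u1 r'" thus ?thesis using F1[OF R u1R r'R r(1) _ r(2)] by simp
    next
      assume "E w r'" thus ?thesis using F1[OF R wR r'R r(1) _ r(3)] by simp
    qed
  qed
  have cK: "card {r'\<in>R. r' \<noteq> x \<and> (\<exists>u\<in>?U. E u r')} \<le> 1"
    using card_mono[OF _ Ksub] by simp
  have cR: "k \<le> card R" using kmin R by blast
  have ineq: "card {r'\<in>R. r' \<noteq> x \<and> (\<exists>u\<in>?U. E u r')} + (k - 1 - card {p\<in>L. \<exists>u\<in>?U. E u p}) < card R - 1"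
    using cK cD cR k3 by linarith
  show False using Free[OF L cL x R xR RL st UL nx cU ineq] .
qed

lemma B2:
  assumes L: "maximal_clique V E L" and cL: "card L = k" and x: "x \<in> L"
    and R: "maximal_clique V E R" and xR: "x \<in> R" and RL: "R \<noteq> L"
    and R': "maximal_clique V E R'" and xR': "x \<in> R'" and RL': "R' \<noteq> L"
  shows "R = R'"
proof (rule ccontr)
  assume RR: "R \<noteq> R'"
  have fL: "finite L" using mc_fin[OF L] .
  have "card (L - {x}) = k - 1" using cL x fL by simp
  hence "2 \<le> card (L - {x})" using k3 by simp
  then obtain p1 p2 where pp: "p1 \<in> L - {x}" "p2 \<in> L - {x}" "p1 \<noteq> p2"
    using two_elems[of "L - {x}"] fL by auto
  have p1: "p1 \<in> L" "p1 \<noteq> x" and p2: "p2 \<in> L" "p2 \<noteq> x" using pp by auto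
  obtain u1 where u1: "E p1 u1" "u1 \<notin> L" using ns_out[OF L p1(1)] by blast
  obtain r where r: "r \<in> R" "r \<noteq> x" "E u1 r" using B3[OF L cL p1(1) x p1(2) u1 R xR RL] by blast
  obtain r' where r': "r' \<in> R'" "r' \<noteq> x" "E u1 r'" using B3[OF L cL p1(1) x p1(2) u1 R' xR' RL'] by blast
  obtain u2 where u2: "E p2 u2" "u2 \<notin> L" using ns_out[OF L p2(1)] by blast
  obtain W where W: "maximal_clique V E W" "{p2,u2} \<subseteq> W" using ext_clique[OF clique_pair[OF u2(1)]] by blast
  have WL: "W \<noteq> L" using W u2 by blast
  have rL: "r \<notin> L" using mc_inter[OF R L RL, of r x] r xR x by blast
  have r'L: "r' \<notin> L" using mc_inter[OF R' L RL', of r' x] r' xR' x by blast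
  have xr: "E x r" using mc_adj[OF R xR r(1)] r(2) by auto
  have xr': "E x r'" using mc_adj[OF R' xR' r'(1)] r'(2) by auto
  have p2W: "p2 \<in> W" using W by blast
  obtain w where w: "w \<in> W" "w \<noteq> p2" "E r w"
    using B3[OF L cL x p2(1) p2(2)[symmetric] xr rL W(1) p2W WL] by blast
  obtain w' where w': "w' \<in> W" "w' \<noteq> p2" "E r' w'"
    using B3[OF L cL x p2(1) p2(2)[symmetric] xr' r'L W(1) p2W WL] by blast
  have wL: "w \<notin> L" using mc_inter[OF W(1) L WL, of w p2] w p2W p2 by blast
  have w'L: "w' \<notin> L" using mc_inter[OF W(1) L WL, of w' p2] w' p2W p2 by blast
  have wp2: "E w p2" using mc_adj[OF W(1) w(1) p2W w(2)] .
  have w'p2: "E w' p2" using mc_adj[OF W(1) w'(1) p2W w'(2)] .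
  have u1p1: "E u1 p1" using symE[OF u1(1)] .
  have c1: "E u1 w"
  proof (rule ccontr)
    assume "\<not> E u1 w"
    thus False using Free2[OF L cL x R xR RL p1(1) p2(1) p1(2) p2(2) pp(3) u1p1 u1(2) wp2 wL _ r(1) r(3) symE[OF w(3)]]
      by blast
  qed
  have c2: "E u1 w'"
  proof (rule ccontr)
    assume "\<not> E u1 w'"
    thus False using Free2[OF L cL x R' xR' RL' p1(1) p2(1) p1(2) p2(2) pp(3) u1p1 u1(2) w'p2 w'L _ r'(1) r'(3) symE[OF w'(3)]]
      by blast
  qed
  show False
  proof (cases "w = w'")
    case True
    have r'R: "r' \<notin> R"
    proof
      assume "r' \<in> R"
      hence "r' = x" using mc_inter[OF R R' RR, of r' x] r'(1) xR xR' by blast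
      thus False using r'(2) by simp
    qed
    have nrr: "\<not> E r r'"
    proof
      assume "E r r'"
      hence "x = r" using F1[OF R r'R xR r(1) symE[OF xr'] symE] by blast
      thus False using r(2) by simp
    qed
    have u1w: "u1 \<noteq> w" using out_not_adj[OF L u1(2) p1(1) p2(1) pp(3) u1p1] wp2 by blast
    have rr: "r \<noteq> r'" using r'R r(1) by blast
    have d: "distinct [u1, w, r, r']"
      using u1w rr neqE[OF r(3)] neqE[OF r'(3)] neqE[OF w(3)] neqE[OF w'(3)] True by auto
    have V4: "u1 \<in> V" "w \<in> V" "r \<in> V" "r' \<in> V" using inV1 inV2 r(3) r'(3) w(3) by auto
    show False using nodiamond[OF V4] d c1 r(3) r'(3) symE[OF w(3)] symE[OF w'(3)] True nrr by simp
  next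
    case False
    have u1W: "u1 \<notin> W"
    proof
      assume "u1 \<in> W"
      moreover have "u1 \<noteq> p2" using u1(2) p2(1) by blast
      ultimately have "E u1 p2" using mc_adj[OF W(1) _ p2W] by blast
      thus False using out_not_adj[OF L u1(2) p1(1) p2(1) pp(3) u1p1] by blast
    qed
    show False using F1[OF W(1) u1W w(1) w'(1) c1 c2] False by blast
  qed
qed

end


lemma lineV_char: "line_V (Kmn_V n n) (Kmn_E n n) = {{Inl i, Inr j} | i j. i < n \<and> j < n}"
proof
  show "line_V (Kmn_V n n) (Kmn_E n n) \<subseteq> {{Inl i, Inr j} | i j. i < n \<and> j < n}"
  proof
    fix e assume "e \<in> line_V (Kmn_V n n) (Kmn_E n n)"
    then obtain x y where e: "e = {x,y}" "x \<in> Kmn_V n n" "y \<in> Kmn_V n n" "Kmn_E n n x y"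
      unfolding line_V_def by blast
    from e(4) have "(\<exists>i j. x = Inl i \<and> y = Inr j) \<or> (\<exists>i j. x = Inr j \<and> y = Inl i)"
      unfolding Kmn_E_def by blast
    thus "e \<in> {{Inl i, Inr j} | i j. i < n \<and> j < n}"
    proof
      assume "\<exists>i j. x = Inl i \<and> y = Inr j"
      then obtain i j where "x = Inl i" "y = Inr j" by blast
      thus ?thesis using e by (auto simp: Kmn_V_def)
    next
      assume "\<exists>i j. x = Inr j \<and> y = Inl i"
      then obtain i j where ij: "x = Inr j" "y = Inl i" by blast
      hence "e = {Inl i, Inr j}" using e(1) by auto
      thus ?thesis using e ij by (auto simp: Kmn_V_def)
    qed
  qed
next
  show "{{Inl i, Inr j} | i j. i < n \<and> j < n} \<subseteq> line_V (Kmn_V n n) (Kmn_E n n)"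
  proof
    fix e assume "e \<in> {{Inl i, Inr j} | i j. i < n \<and> j < n}"
    then obtain i j where ij: "e = {Inl i, Inr j}" "i < n" "j < n" by blast
    have "Inl i \<in> Kmn_V n n" "Inr j \<in> Kmn_V n n" using ij by (auto simp: Kmn_V_def)
    moreover hence "Kmn_E n n (Inl i) (Inr j)" unfolding Kmn_E_def by blast
    ultimately show "e \<in> line_V (Kmn_V n n) (Kmn_E n n)" unfolding line_V_def using ij(1) by blast
  qed
qed

lemma pair_eq: "({Inl a, Inr b} = {Inl c, Inr d}) \<longleftrightarrow> a = c \<and> b = d"
  by (auto simp: doubleton_eq_iff)

lemma pair_int: "({Inl a, Inr b} \<inter> {Inl c, Inr d} \<noteq> {}) \<longleftrightarrow> a = c \<or> b = d"
  by auto

context sg begin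

lemma iso_rook:
  assumes g: "bij_betw g {..<n} A" and h: "bij_betw h {..<n} B"
    and cf: "\<forall>v\<in>V. cf v \<in> A" and rf: "\<forall>v\<in>V. rf v \<in> B"
    and inj: "\<forall>v\<in>V. \<forall>w\<in>V. cf v = cf w \<and> rf v = rf w \<longrightarrow> v = w"
    and surj: "\<forall>a\<in>A. \<forall>b\<in>B. \<exists>v\<in>V. cf v = a \<and> rf v = b"
    and adj: "\<forall>v\<in>V. \<forall>w\<in>V. E v w \<longleftrightarrow> v \<noteq> w \<and> (cf v = cf w \<or> rf v = rf w)"
  shows "graph_iso V E (line_V (Kmn_V n n) (Kmn_E n n)) (line_E (Kmn_V n n) (Kmn_E n n))"
proof -
  define ig where "ig = inv_into {..<n} g"
  define ih where "ih = inv_into {..<n} h"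
  have gA: "\<And>a. a \<in> A \<Longrightarrow> ig a < n \<and> g (ig a) = a"
    using g unfolding ig_def bij_betw_def
    by (metis f_inv_into_f inv_into_into lessThan_iff)
  have hB: "\<And>b. b \<in> B \<Longrightarrow> ih b < n \<and> h (ih b) = b"
    using h unfolding ih_def bij_betw_def
    by (metis f_inv_into_f inv_into_into lessThan_iff)
  have gi: "\<And>i. i < n \<Longrightarrow> ig (g i) = i" using g unfolding ig_def bij_betw_def
    by (simp add: inv_into_f_f)
  have hi: "\<And>i. i < n \<Longrightarrow> ih (h i) = i" using h unfolding ih_def bij_betw_def
    by (simp add: inv_into_f_f)
  have gin: "\<And>i. i < n \<Longrightarrow> g i \<in> A" using g bij_betwE by blast
  have hin: "\<And>i. i < n \<Longrightarrow> h i \<in> B" using h bij_betwE by blast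
  have igeq: "\<And>a a'. a \<in> A \<Longrightarrow> a' \<in> A \<Longrightarrow> ig a = ig a' \<longleftrightarrow> a = a'" using gA by metis
  have iheq: "\<And>a a'. a \<in> B \<Longrightarrow> a' \<in> B \<Longrightarrow> ih a = ih a' \<longleftrightarrow> a = a'" using hB by metis
  define f where "f v = {Inl (ig (cf v)), Inr (ih (rf v))}" for v
  let ?LV = "line_V (Kmn_V n n) (Kmn_E n n)"
  have fLV: "\<And>v. v \<in> V \<Longrightarrow> f v \<in> ?LV"
    unfolding lineV_char f_def using gA hB cf rf by blast
  have feq: "\<And>v w. v \<in> V \<Longrightarrow> w \<in> V \<Longrightarrow> f v = f w \<longleftrightarrow> cf v = cf w \<and> rf v = rf w"
    unfolding f_def pair_eq using igeq iheq cf rf by blast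
  have fint: "\<And>v w. v \<in> V \<Longrightarrow> w \<in> V \<Longrightarrow> f v \<inter> f w \<noteq> {} \<longleftrightarrow> cf v = cf w \<or> rf v = rf w"
    unfolding f_def pair_int using igeq iheq cf rf by blast
  have injf: "inj_on f V" using feq inj by (auto simp: inj_on_def)
  have imf: "f ` V = ?LV"
  proof
    show "f ` V \<subseteq> ?LV" using fLV by blast
  next
    show "?LV \<subseteq> f ` V"
    proof
      fix e assume "e \<in> ?LV"
      then obtain i j where ij: "e = {Inl i, Inr j}" "i < n" "j < n" unfolding lineV_char by blast
      obtain v where v: "v \<in> V" "cf v = g i" "rf v = h j" using surj gin[OF ij(2)] hin[OF ij(3)] by blast
      have "f v = e" unfolding f_def v(2,3) gi[OF ij(2)] hi[OF ij(3)] ij(1) ..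
      thus "e \<in> f ` V" using v(1) by blast
    qed
  qed
  have bij: "bij_betw f V ?LV" using injf imf by (simp add: bij_betw_def)
  have "\<forall>x\<in>V. \<forall>y\<in>V. E x y \<longleftrightarrow> line_E (Kmn_V n n) (Kmn_E n n) (f x) (f y)"
  proof (intro ballI)
    fix x y assume x: "x \<in> V" and y: "y \<in> V"
    have "line_E (Kmn_V n n) (Kmn_E n n) (f x) (f y) \<longleftrightarrow> f x \<noteq> f y \<and> f x \<inter> f y \<noteq> {}"
      unfolding line_E_def using fLV x y by blast
    also have "\<dots> \<longleftrightarrow> x \<noteq> y \<and> (cf x = cf y \<or> rf x = rf y)"
      using feq[OF x y] fint[OF x y] inj x y by blast
    also have "\<dots> \<longleftrightarrow> E x y" using adj x y by blast
    finally show "E x y \<longleftrightarrow> line_E (Kmn_V n n) (Kmn_E n n) (f x) (f y)" by simp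
  qed
  thus ?thesis using bij unfolding graph_iso_def by blast
qed

end

context mk begin

definition Yc :: "'a set \<Rightarrow> 'a \<Rightarrow> 'a set" where
  "Yc L p = insert p {w. E p w \<and> w \<notin> L}"

lemma Yc_mc:
  assumes L: "maximal_clique V E L" and cL: "card L = k" and p: "p \<in> L"
  shows "maximal_clique V E (Yc L p) \<and> card (Yc L p) = k \<and> Yc L p \<noteq> L"
proof -
  obtain u where u: "E p u" "u \<notin> L" using ns_out[OF L p] by blast
  obtain Y where Y: "maximal_clique V E Y" "{p,u} \<subseteq> Y" using ext_clique[OF clique_pair[OF u(1)]] by blast
  have YL: "Y \<noteq> L" using Y u by blast
  have "Y = Yc L p"
  proof
    show "Y \<subseteq> Yc L p"
    proof
      fix w assume w: "w \<in> Y"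
      show "w \<in> Yc L p"
      proof (cases "w = p")
        case True thus ?thesis by (simp add: Yc_def)
      next
        case False
        have "E p w" using mc_adj[OF Y(1) _ w] Y(2) False by auto
        moreover have "w \<notin> L" using mc_inter[OF Y(1) L YL, of w p] w Y(2) p False by blast
        ultimately show ?thesis by (simp add: Yc_def)
      qed
    qed
  next
    show "Yc L p \<subseteq> Y"
    proof
      fix w assume w: "w \<in> Yc L p"
      show "w \<in> Y"
      proof (cases "w = p")
        case True thus ?thesis using Y by blast
      next
        case False
        hence pw: "E p w" "w \<notin> L" using w by (auto simp: Yc_def)
        obtain Y' where Y': "maximal_clique V E Y'" "{p,w} \<subseteq> Y'" using ext_clique[OF clique_pair[OF pw(1)]] by blast
        have "Y' \<noteq> L" using Y' pw by blast
        hence "Y' = Y" using B2[OF L cL p Y'(1) _ _ Y(1) _ YL] Y'(2) Y(2) by blast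
        thus ?thesis using Y' by blast
      qed
    qed
  qed
  thus ?thesis using Y(1) YL B1[OF L cL p Y(1) _ YL] Y(2) by auto
qed

lemma Cl:
  assumes L: "maximal_clique V E L" and cL: "card L = k" and v: "v \<in> L"
    and vu: "E v u" "u \<notin> L" and vw: "E v w" "w \<notin> L" and uw: "u \<noteq> w"
  shows "E u w"
proof -
  have "u \<in> Yc L v" "w \<in> Yc L v" using vu vw by (auto simp: Yc_def)
  thus ?thesis using mc_adj Yc_mc[OF L cL v] uw by blast
qed

lemma cover:
  assumes L: "maximal_clique V E L" and cL: "card L = k"
  shows "\<forall>v\<in>V. v \<in> L \<or> (\<exists>p\<in>L. E v p)"
proof
  fix v assume v: "v \<in> V"
  have "L \<noteq> {}" using cL k3 by auto
  then obtain p0 where p0: "p0 \<in> L" by blast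
  have "p0 \<in> V" using mc_sub[OF L] p0 by blast
  hence "E\<^sup>*\<^sup>* p0 v" using con v unfolding connected_graph_def by blast
  thus "v \<in> L \<or> (\<exists>p\<in>L. E v p)"
  proof (induction rule: rtranclp_induct)
    case base thus ?case using p0 by simp
  next
    case (step y z)
    show ?case
    proof (cases "y \<in> L")
      case True
      thus ?thesis using step(2) symE by blast
    next
      case yL: False
      then obtain p where p: "p \<in> L" "E y p" using step(3) by blast
      let ?Y = "Yc L p"
      have Y: "maximal_clique V E ?Y" "card ?Y = k" "?Y \<noteq> L" using Yc_mc[OF L cL p(1)] by auto
      show ?thesis
      proof (cases "z \<in> ?Y")
        case True
        thus ?thesis using p(1) symE by (auto simp: Yc_def)
      next
        case False
        have yY: "y \<in> ?Y" using p symE yL by (auto simp: Yc_def)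
        have pY: "p \<in> ?Y" by (simp add: Yc_def)
        have "y \<noteq> p" using yL p(1) by blast
        obtain w where w: "w \<in> L" "w \<noteq> p" "E z w"
          using B3[OF Y(1) Y(2) yY pY \<open>y \<noteq> p\<close> step(2) False L p(1) Y(3)[symmetric]] by blast
        thus ?thesis by blast
      qed
    qed
  qed
qed

end


locale mkL = mk +
  fixes L p0
  assumes L: "maximal_clique V E L" and cL: "card L = k" and p0: "p0 \<in> L"
begin

definition "Y0 = Yc L p0"
definition "col v = (if v \<in> L then v else (THE p. p \<in> L \<and> E v p))"
definition "rr v = (if v \<in> L then p0 else if E v p0 then v else (THE \<rho>. \<rho> \<in> Y0 \<and> \<rho> \<noteq> p0 \<and> E v \<rho>))"

lemma Y0: "maximal_clique V E Y0" "card Y0 = k" "Y0 \<noteq> L"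
  using Yc_mc[OF L cL p0] by (auto simp: Y0_def)

lemma p0Y0: "p0 \<in> Y0" by (simp add: Y0_def Yc_def)

lemma memY0: "\<rho> \<in> Y0 \<longleftrightarrow> \<rho> = p0 \<or> (E p0 \<rho> \<and> \<rho> \<notin> L)"
  by (auto simp: Y0_def Yc_def)

lemma memYc: "w \<in> Yc L c \<longleftrightarrow> w = c \<or> (E c w \<and> w \<notin> L)"
  by (auto simp: Yc_def)

lemma notY0: "v \<notin> L \<Longrightarrow> \<not> E v p0 \<Longrightarrow> v \<notin> Y0"
proof
  assume "v \<notin> L" "\<not> E v p0" "v \<in> Y0"
  hence "E p0 v" using memY0[of v] p0 by auto
  thus False using symE \<open>\<not> E v p0\<close> by blast
qed

lemma inY0: "v \<notin> L \<Longrightarrow> E v p0 \<Longrightarrow> v \<in> Y0 \<and> v \<noteq> p0"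
proof -
  assume "v \<notin> L" "E v p0"
  moreover hence "E p0 v" using symE by blast
  ultimately show ?thesis using memY0[of v] p0 by auto
qed

lemma col_in: "v \<in> L \<Longrightarrow> col v = v" by (simp add: col_def)

lemma col_out:
  assumes v: "v \<in> V" "v \<notin> L"
  shows "col v \<in> L \<and> E v (col v) \<and> (\<forall>p\<in>L. E v p \<longrightarrow> p = col v)"
proof -
  obtain p where p: "p \<in> L" "E v p" using cover[OF L cL] v by blast
  have uq: "\<And>q. q \<in> L \<and> E v q \<Longrightarrow> q = p" using F1[OF L v(2)] p by blast
  have "(THE p. p \<in> L \<and> E v p) = p" using p uq by (intro the_equality) blast+
  hence cv: "col v = p" using v(2) by (simp add: col_def)
  show ?thesis using cv p uq by blast
qed

lemma rrL: "v \<in> L \<Longrightarrow> rr v = p0" by (simp add: rr_def)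
lemma rrY: "v \<notin> L \<Longrightarrow> E v p0 \<Longrightarrow> rr v = v" by (simp add: rr_def)

lemma rr_out:
  assumes v: "v \<in> V" "v \<notin> L" and nv: "\<not> E v p0"
  shows "rr v \<in> Y0 \<and> rr v \<noteq> p0 \<and> E v (rr v) \<and> (\<forall>\<rho>. \<rho> \<in> Y0 \<and> \<rho> \<noteq> p0 \<and> E v \<rho> \<longrightarrow> \<rho> = rr v)"
proof -
  have c: "col v \<in> L" "E v (col v)" using col_out[OF v] by auto
  have cp: "col v \<noteq> p0" using c nv by auto
  obtain w where w: "w \<in> Y0" "w \<noteq> p0" "E v w"
    using B3[OF L cL c(1) p0 cp symE[OF c(2)] v(2) Y0(1) p0Y0 Y0(3)] by blast
  have vY: "v \<notin> Y0" using notY0 v(2) nv by blast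
  have uq: "\<And>\<rho>. \<rho> \<in> Y0 \<and> \<rho> \<noteq> p0 \<and> E v \<rho> \<Longrightarrow> \<rho> = w" using F1[OF Y0(1) vY] w by blast
  have "(THE \<rho>. \<rho> \<in> Y0 \<and> \<rho> \<noteq> p0 \<and> E v \<rho>) = w" using w uq by (intro the_equality) blast+
  hence rv: "rr v = w" using v(2) nv by (simp add: rr_def)
  show ?thesis using rv w uq by blast
qed

lemma rr_nL:
  assumes v: "v \<in> V" "v \<notin> L"
  shows "rr v \<in> Y0 \<and> rr v \<noteq> p0 \<and> rr v \<notin> L"
proof (cases "E v p0")
  case True
  thus ?thesis using v rrY[OF v(2) True] inY0[OF v(2) True] by auto
next
  case False
  thus ?thesis using rr_out[OF v False] memY0 by auto
qed

lemma rr_range: "v \<in> V \<Longrightarrow> rr v \<in> Y0"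
  using rr_nL rrL p0Y0 by (cases "v \<in> L") auto

lemma col_range: "v \<in> V \<Longrightarrow> col v \<in> L"
  using col_out col_in by (cases "v \<in> L") auto

lemma rho_notYc:
  assumes \<rho>: "\<rho> \<in> Y0" "\<rho> \<noteq> p0" and c: "c \<in> L" "c \<noteq> p0"
  shows "\<rho> \<notin> Yc L c"
proof
  assume "\<rho> \<in> Yc L c"
  hence "\<rho> = c \<or> (E c \<rho> \<and> \<rho> \<notin> L)" using memYc[of \<rho> c] by simp
  moreover have "E p0 \<rho>" "\<rho> \<notin> L" using \<rho> memY0 by auto
  ultimately have "E c \<rho>" using c(1) by auto
  hence "c = p0" using F1[OF L \<open>\<rho> \<notin> L\<close> c(1) p0 symE symE[OF \<open>E p0 \<rho>\<close>]] by blast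
  thus False using c(2) by simp
qed

lemma inYc_col: "v \<in> V \<Longrightarrow> v \<notin> L \<Longrightarrow> v \<in> Yc L (col v)"
proof -
  assume v: "v \<in> V" "v \<notin> L"
  have "E v (col v)" using col_out[OF v] by blast
  hence "E (col v) v" using symE by blast
  thus ?thesis using memYc[of v "col v"] v(2) by simp
qed

lemma adj_fwd:
  assumes v: "v \<in> V" and w: "w \<in> V" and e: "E v w"
  shows "col v = col w \<or> rr v = rr w"
proof (cases "v \<in> L")
  case vL: True
  show ?thesis
  proof (cases "w \<in> L")
    case True thus ?thesis using vL rrL by simp
  next
    case False
    have "col w = v" using col_out[OF w False] vL symE[OF e] by blast
    thus ?thesis using col_in[OF vL] by simp
  qed
next
  case vL: False
  show ?thesis
  proof (cases "w \<in> L")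
    case True
    have "col v = w" using col_out[OF v vL] True e by blast
    thus ?thesis using col_in[OF True] by simp
  next
    case wL: False
    show ?thesis
    proof (cases "col v = col w")
      case True thus ?thesis by simp
    next
      case cc: False
      have cv: "col v \<in> L" "E v (col v)" using col_out[OF v vL] by auto
      have cw: "col w \<in> L" "E w (col w)" using col_out[OF w wL] by auto
      show ?thesis
      proof (cases "E v p0")
        case vp: True
        have "col v = p0" using col_out[OF v vL] p0 vp by blast
        hence wp: "\<not> E w p0" using col_out[OF w wL] p0 cc by blast
        have "v \<in> Y0" "v \<noteq> p0" using inY0[OF vL vp] by auto
        hence "v = rr w" using rr_out[OF w wL wp] symE[OF e] by blast
        thus ?thesis using rrY[OF vL vp] by simp
      next
        case vp: False
        show ?thesis
        proof (cases "E w p0")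
          case wp: True
          have "col w = p0" using col_out[OF w wL] p0 wp by blast
          hence "\<not> E v p0" using vp by simp
          have "w \<in> Y0" "w \<noteq> p0" using inY0[OF wL wp] by auto
          hence "w = rr v" using rr_out[OF v vL vp] e by blast
          thus ?thesis using rrY[OF wL wp] by simp
        next
          case wp: False
          let ?\<rho> = "rr v"
          have \<rho>: "?\<rho> \<in> Y0" "?\<rho> \<noteq> p0" "E v ?\<rho>" using rr_out[OF v vL vp] by auto
          have cp: "col v \<noteq> p0" using cv vp by auto
          let ?Y = "Yc L (col v)"
          have Ym: "maximal_clique V E ?Y" "card ?Y = k" using Yc_mc[OF L cL cv(1)] by auto
          have vY: "v \<in> ?Y" using inYc_col[OF v vL] .
          have rY: "?\<rho> \<notin> ?Y" using rho_notYc[OF \<rho>(1,2) cv(1) cp] .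
          have wY: "w \<notin> ?Y"
          proof
            assume "w \<in> ?Y"
            hence "E (col v) w" using memYc[of w "col v"] wL cv(1) by auto
            hence "col v = col w" using col_out[OF w wL] cv(1) symE by blast
            thus False using cc by simp
          qed
          have wY0: "w \<notin> Y0" using notY0 wL wp by blast
          have rw: "?\<rho> \<noteq> w" using \<rho>(1) wY0 by blast
          have "E ?\<rho> w" using Cl[OF Ym(1) Ym(2) vY \<rho>(3) rY e wY rw] .
          hence "?\<rho> = rr w" using rr_out[OF w wL wp] \<rho>(1,2) symE by blast
          thus ?thesis by simp
        qed
      qed
    qed
  qed
qed

lemma adj_bwd:
  assumes v: "v \<in> V" and w: "w \<in> V" and vw: "v \<noteq> w" and h: "col v = col w \<or> rr v = rr w"
  shows "E v w"
  using h
proof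
  assume cc: "col v = col w"
  show ?thesis
  proof (cases "v \<in> L")
    case vL: True
    show ?thesis
    proof (cases "w \<in> L")
      case True thus ?thesis using mc_adj[OF L vL True vw] by simp
    next
      case False
      have "col w = v" using cc col_in[OF vL] by simp
      thus ?thesis using col_out[OF w False] symE by metis
    qed
  next
    case vL: False
    show ?thesis
    proof (cases "w \<in> L")
      case True
      have "col v = w" using cc col_in[OF True] by simp
      thus ?thesis using col_out[OF v vL] by metis
    next
      case wL: False
      have cv: "col v \<in> L" using col_out[OF v vL] by auto
      have "v \<in> Yc L (col v)" "w \<in> Yc L (col v)" using inYc_col[OF v vL] inYc_col[OF w wL] cc by auto
      thus ?thesis using mc_adj Yc_mc[OF L cL cv] vw by blast
    qed
  qed
next
  assume rv: "rr v = rr w"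
  show ?thesis
  proof (cases "v \<in> L")
    case vL: True
    show ?thesis
    proof (cases "w \<in> L")
      case True thus ?thesis using mc_adj[OF L vL True vw] by simp
    next
      case False thus ?thesis using rv rrL[OF vL] rr_nL[OF w False] by simp
    qed
  next
    case vL: False
    show ?thesis
    proof (cases "w \<in> L")
      case True thus ?thesis using rv rrL[OF True] rr_nL[OF v vL] by simp
    next
      case wL: False
      show ?thesis
      proof (cases "E v p0")
        case vp: True
        have rvv: "rr v = v" using rrY[OF vL vp] .
        show ?thesis
        proof (cases "E w p0")
          case True thus ?thesis using rv rvv rrY[OF wL True] vw by simp
        next
          case False
          have "E w (rr w)" using rr_out[OF w wL False] by blast
          thus ?thesis using rv rvv symE by metis
        qed
      next
        case vp: False
        show ?thesis
        proof (cases "E w p0")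
          case wp: True
          have "E v (rr v)" using rr_out[OF v vL vp] by blast
          thus ?thesis using rv rrY[OF wL wp] by simp
        next
          case wp: False
          have r1: "rr v \<in> Y0" "E v (rr v)" using rr_out[OF v vL vp] by auto
          have r2: "E w (rr v)" using rr_out[OF w wL wp] rv by auto
          have vY: "v \<notin> Y0" and wY: "w \<notin> Y0" using notY0 vL wL vp wp by blast+
          show ?thesis using Cl[OF Y0(1) Y0(2) r1(1) symE[OF r1(2)] vY symE[OF r2] wY vw] .
        qed
      qed
    qed
  qed
qed

lemma inj_cr:
  assumes v: "v \<in> V" and w: "w \<in> V" and cc: "col v = col w" and rv: "rr v = rr w"
  shows "v = w"
proof (rule ccontr)
  assume vw: "v \<noteq> w"
  show False
  proof (cases "v \<in> L")
    case vL: True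
    show False
    proof (cases "w \<in> L")
      case True thus False using cc col_in vL vw by simp
    next
      case False thus False using rv rrL[OF vL] rr_nL[OF w False] by simp
    qed
  next
    case vL: False
    show False
    proof (cases "w \<in> L")
      case True thus False using rv rrL[OF True] rr_nL[OF v vL] by simp
    next
      case wL: False
      have cv: "col v \<in> L" "E v (col v)" using col_out[OF v vL] by auto
      show False
      proof (cases "E v p0")
        case vp: True
        have cp: "col v = p0" using col_out[OF v vL] p0 vp by blast
        have wp: "E w p0" using col_out[OF w wL] cc cp by metis
        thus False using rv rrY[OF vL vp] rrY[OF wL wp] vw by simp
      next
        case vp: False
        have wp: "\<not> E w p0"
        proof
          assume wp: "E w p0"
          have "col w = p0" using col_out[OF w wL] p0 wp by blast
          thus False using cc cv vp by simp
        qed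
        have r1: "rr v \<in> Y0" "rr v \<noteq> p0" "E v (rr v)" using rr_out[OF v vL vp] by auto
        have r2: "E w (rr v)" using rr_out[OF w wL wp] rv by auto
        have cp: "col v \<noteq> p0" using cv vp by auto
        have rY: "rr v \<notin> Yc L (col v)" using rho_notYc[OF r1(1,2) cv(1) cp] .
        have "v \<in> Yc L (col v)" "w \<in> Yc L (col v)" using inYc_col[OF v vL] inYc_col[OF w wL] cc by auto
        hence "v = w" using F1[OF conjunct1[OF Yc_mc[OF L cL cv(1)]] rY] symE[OF r1(3)] symE[OF r2] by blast
        thus False using vw by simp
      qed
    qed
  qed
qed

lemma surj_cr:
  assumes c: "c \<in> L" and \<rho>: "\<rho> \<in> Y0"
  shows "\<exists>v\<in>V. col v = c \<and> rr v = \<rho>"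
proof (cases "\<rho> = p0")
  case True
  thus ?thesis using c col_in rrL mc_sub[OF L] by blast
next
  case rp: False
  have pr: "E p0 \<rho>" "\<rho> \<notin> L" using \<rho> memY0 rp by auto
  have rV: "\<rho> \<in> V" using inV2[OF pr(1)] .
  show ?thesis
  proof (cases "c = p0")
    case True
    have "col \<rho> = p0" using col_out[OF rV pr(2)] p0 symE[OF pr(1)] by blast
    moreover have "rr \<rho> = \<rho>" using rrY[OF pr(2) symE[OF pr(1)]] .
    ultimately show ?thesis using rV True by blast
  next
    case cp: False
    have Yc: "maximal_clique V E (Yc L c)" "Yc L c \<noteq> L" using Yc_mc[OF L cL c] by auto
    have cY: "c \<in> Yc L c" by (simp add: Yc_def)
    obtain w where w: "w \<in> Yc L c" "w \<noteq> c" "E \<rho> w"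
      using B3[OF L cL p0 c cp[symmetric] pr Yc(1) cY Yc(2)] by blast
    have cw: "E c w" "w \<notin> L" using w memYc by auto
    have wV: "w \<in> V" using inV2[OF cw(1)] .
    have colw: "col w = c" using col_out[OF wV cw(2)] c symE[OF cw(1)] by blast
    have wp: "\<not> E w p0" using out_not_adj[OF L cw(2) c p0 cp symE[OF cw(1)]] .
    have "rr w = \<rho>" using rr_out[OF wV cw(2) wp] \<rho> rp symE[OF w(3)] by blast
    thus ?thesis using colw wV by blast
  qed
qed

lemma caseB: "graph_iso V E (line_V (Kmn_V k k) (Kmn_E k k)) (line_E (Kmn_V k k) (Kmn_E k k))"
proof -
  have fL: "finite L" using mc_fin[OF L] .
  have fY: "finite Y0" using mc_fin[OF Y0(1)] .
  obtain g where g: "bij_betw g {..<k} L"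
    using ex_bij_betw_nat_finite[OF fL] cL atLeast0LessThan by auto
  obtain h where h: "bij_betw h {..<k} Y0"
    using ex_bij_betw_nat_finite[OF fY] Y0(2) atLeast0LessThan by auto
  show ?thesis
  proof (rule iso_rook[OF g h])
    show "\<forall>v\<in>V. col v \<in> L" using col_range by blast
    show "\<forall>v\<in>V. rr v \<in> Y0" using rr_range by blast
    show "\<forall>v\<in>V. \<forall>w\<in>V. col v = col w \<and> rr v = rr w \<longrightarrow> v = w" using inj_cr by blast
    show "\<forall>a\<in>L. \<forall>b\<in>Y0. \<exists>v\<in>V. col v = a \<and> rr v = b" using surj_cr by blast
    show "\<forall>v\<in>V. \<forall>w\<in>V. E v w \<longleftrightarrow> v \<noteq> w \<and> (col v = col w \<or> rr v = rr w)"
      using adj_fwd adj_bwd neqE by blast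
  qed
qed

end


lemma iso_sym:
  assumes "graph_iso V E V' E'" shows "graph_iso V' E' V E"
proof -
  obtain f where f: "bij_betw f V V'" "\<forall>x\<in>V. \<forall>y\<in>V. E x y \<longleftrightarrow> E' (f x) (f y)"
    using assms unfolding graph_iso_def by blast
  let ?g = "inv_into V f"
  have bg: "bij_betw ?g V' V" using bij_betw_inv_into[OF f(1)] .
  have fg: "\<And>x. x \<in> V' \<Longrightarrow> f (?g x) = x" using f(1) f_inv_into_f bij_betw_imp_surj_on by metis
  have gV: "\<And>x. x \<in> V' \<Longrightarrow> ?g x \<in> V" using bg bij_betwE by blast
  have "\<forall>x\<in>V'. \<forall>y\<in>V'. E' x y \<longleftrightarrow> E (?g x) (?g y)"
  proof (intro ballI)
    fix x y assume x: "x \<in> V'" and y: "y \<in> V'"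
    have "E (?g x) (?g y) \<longleftrightarrow> E' (f (?g x)) (f (?g y))" using f(2) gV x y by blast
    thus "E' x y \<longleftrightarrow> E (?g x) (?g y)" using fg x y by simp
  qed
  thus ?thesis using bg unfolding graph_iso_def by blast
qed

lemma iso_CIS:
  assumes iso: "graph_iso V E V' E'" and cis': "CIS V' E'"
  shows "CIS V E"
proof -
  obtain f where f: "bij_betw f V V'" "\<forall>x\<in>V. \<forall>y\<in>V. E x y \<longleftrightarrow> E' (f x) (f y)"
    using iso unfolding graph_iso_def by blast
  let ?g = "inv_into V f"
  have bg: "bij_betw ?g V' V" using bij_betw_inv_into[OF f(1)] .
  have fg: "\<And>x. x \<in> V' \<Longrightarrow> f (?g x) = x" using f(1) f_inv_into_f bij_betw_imp_surj_on by metis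
  have gf: "\<And>x. x \<in> V \<Longrightarrow> ?g (f x) = x" using f(1) bij_betw_inv_into_left by metis
  have gV: "\<And>x. x \<in> V' \<Longrightarrow> ?g x \<in> V" using bg bij_betwE by blast
  have fV: "\<And>x. x \<in> V \<Longrightarrow> f x \<in> V'" using f(1) bij_betwE by blast
  have injf: "inj_on f V" using f(1) bij_betw_imp_inj_on by blast
  have E'g: "\<And>x y. x \<in> V' \<Longrightarrow> y \<in> V' \<Longrightarrow> E' x y \<longleftrightarrow> E (?g x) (?g y)"
    using f(2) gV fg by metis
  have img: "\<And>C'. C' \<subseteq> V' \<Longrightarrow> f ` (?g ` C') = C'" using fg by (force simp: image_image)
  have mc: "\<And>K. maximal_clique V E K \<Longrightarrow> maximal_clique V' E' (f ` K)"
  proof -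
    fix K assume K: "maximal_clique V E K"
    have KV: "K \<subseteq> V" using K by (simp add: maximal_clique_def clique_def)
    have cl: "clique V' E' (f ` K)"
      unfolding clique_def
    proof (intro conjI ballI impI)
      show "f ` K \<subseteq> V'" using KV fV by blast
    next
      fix x' y' assume x': "x' \<in> f ` K" and y': "y' \<in> f ` K" and ne: "x' \<noteq> y'"
      then obtain x y where xy: "x \<in> K" "y \<in> K" "x' = f x" "y' = f y" by blast
      have "x \<noteq> y" using ne xy by blast
      hence "E x y" using K xy unfolding maximal_clique_def clique_def by blast
      thus "E' x' y'" using f(2) KV xy by blast
    qed
    have "\<forall>C'. clique V' E' C' \<and> f ` K \<subseteq> C' \<longrightarrow> C' = f ` K"
    proof (intro allI impI)
      fix C' assume C': "clique V' E' C' \<and> f ` K \<subseteq> C'"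
      have C'V: "C' \<subseteq> V'" using C' by (simp add: clique_def)
      have "clique V E (?g ` C')"
        unfolding clique_def
      proof (intro conjI ballI impI)
        show "?g ` C' \<subseteq> V" using gV C'V by blast
      next
        fix x y assume x: "x \<in> ?g ` C'" and y: "y \<in> ?g ` C'" and xy: "x \<noteq> y"
        then obtain x' y' where x': "x' \<in> C'" "x = ?g x'" and y': "y' \<in> C'" "y = ?g y'" by blast
        have "x' \<noteq> y'" using xy x' y' by blast
        hence "E' x' y'" using C' x'(1) y'(1) unfolding clique_def by blast
        thus "E x y" using E'g C'V x' y' by blast
      qed
      moreover have "K \<subseteq> ?g ` C'"
      proof
        fix k assume "k \<in> K"
        hence "f k \<in> C'" "?g (f k) = k" using C' gf KV by auto
        thus "k \<in> ?g ` C'" by force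
      qed
      ultimately have "?g ` C' = K" using K unfolding maximal_clique_def by blast
      thus "C' = f ` K" using img[OF C'V] by simp
    qed
    thus "maximal_clique V' E' (f ` K)" using cl unfolding maximal_clique_def by blast
  qed
  have ms: "\<And>S. maximal_stable V E S \<Longrightarrow> maximal_stable V' E' (f ` S)"
  proof -
    fix S assume S: "maximal_stable V E S"
    have SV: "S \<subseteq> V" using S by (simp add: maximal_stable_def stable_def)
    have st: "stable V' E' (f ` S)"
      unfolding stable_def
    proof (intro conjI ballI)
      show "f ` S \<subseteq> V'" using SV fV by blast
    next
      fix x' y' assume x': "x' \<in> f ` S" and y': "y' \<in> f ` S"
      then obtain x y where xy: "x \<in> S" "y \<in> S" "x' = f x" "y' = f y" by blast
      have "\<not> E x y" using S xy unfolding maximal_stable_def stable_def by blast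
      thus "\<not> E' x' y'" using f(2) SV xy by blast
    qed
    have "\<forall>C'. stable V' E' C' \<and> f ` S \<subseteq> C' \<longrightarrow> C' = f ` S"
    proof (intro allI impI)
      fix C' assume C': "stable V' E' C' \<and> f ` S \<subseteq> C'"
      have C'V: "C' \<subseteq> V'" using C' by (simp add: stable_def)
      have "stable V E (?g ` C')"
        unfolding stable_def
      proof (intro conjI ballI)
        show "?g ` C' \<subseteq> V" using gV C'V by blast
      next
        fix x y assume x: "x \<in> ?g ` C'" and y: "y \<in> ?g ` C'"
        then obtain x' y' where x': "x' \<in> C'" "x = ?g x'" and y': "y' \<in> C'" "y = ?g y'" by blast
        have "\<not> E' x' y'" using C' x'(1) y'(1) unfolding stable_def by blast
        thus "\<not> E x y" using E'g C'V x' y' by blast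
      qed
      moreover have "S \<subseteq> ?g ` C'"
      proof
        fix k assume "k \<in> S"
        hence "f k \<in> C'" "?g (f k) = k" using C' gf SV by auto
        thus "k \<in> ?g ` C'" by force
      qed
      ultimately have "?g ` C' = S" using S unfolding maximal_stable_def by blast
      thus "C' = f ` S" using img[OF C'V] by simp
    qed
    thus "maximal_stable V' E' (f ` S)" using st unfolding maximal_stable_def by blast
  qed
  show ?thesis unfolding CIS_def strong_clique_def
  proof (intro allI impI conjI)
    fix K assume K: "maximal_clique V E K"
    show "clique V E K" using K by (simp add: maximal_clique_def)
    fix S assume S: "maximal_stable V E S"
    have "f ` K \<inter> f ` S \<noteq> {}" using cis' mc[OF K] ms[OF S] by (simp add: CIS_def strong_clique_def)
    then obtain a b where ab: "a \<in> K" "b \<in> S" "f a = f b" by blast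
    have "a \<in> V" "b \<in> V" using K S ab by (auto simp: maximal_clique_def clique_def maximal_stable_def stable_def)
    hence "a = b" using injf ab(3) by (simp add: inj_on_def)
    thus "K \<inter> S \<noteq> {}" using ab by blast
  qed
qed

context sg begin

lemma cs_CIS: "clique_simplicial V E \<Longrightarrow> CIS V E"
  unfolding CIS_def strong_clique_def
proof (intro allI impI conjI)
  fix K assume cs: "clique_simplicial V E" and K: "maximal_clique V E K"
  show "clique V E K" using K by (simp add: maximal_clique_def)
  obtain v where v: "simplicial_vertex V E v" "K = closed_nbhd V E v"
    using cs K unfolding clique_simplicial_def simplicial_clique_def by blast
  have vV: "v \<in> V" using v(1) by (simp add: simplicial_vertex_def)
  fix S assume S: "maximal_stable V E S"
  show "K \<inter> S \<noteq> {}"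
  proof (cases "v \<in> S")
    case True thus ?thesis using v(2) by (auto simp: closed_nbhd_def)
  next
    case False
    then obtain s where "s \<in> S" "E v s" using ms_out[OF S vV] by blast
    moreover hence "s \<in> K" using v(2) inV2 by (auto simp: closed_nbhd_def)
    ultimately show ?thesis by blast
  qed
qed

lemma mc_nonempty: "V \<noteq> {} \<Longrightarrow> maximal_clique V E K \<Longrightarrow> K \<noteq> {}"
proof
  assume "V \<noteq> {}" "maximal_clique V E K" "K = {}"
  then obtain v where v: "v \<in> V" by blast
  have "{v} = K" using \<open>maximal_clique V E K\<close> clique_single[OF v] \<open>K = {}\<close>
    unfolding maximal_clique_def by blast
  thus False using \<open>K = {}\<close> by simp
qed

lemma bip_CIS:
  assumes bip: "\<forall>x\<in>V. \<forall>y\<in>V. E x y \<longleftrightarrow> \<phi> x \<noteq> \<phi> y" and ne: "V \<noteq> {}"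
  shows "CIS V E"
  unfolding CIS_def strong_clique_def
proof (intro allI impI conjI)
  fix K assume K: "maximal_clique V E K"
  show "clique V E K" using K by (simp add: maximal_clique_def)
  fix S assume S: "maximal_stable V E S"
  show "K \<inter> S \<noteq> {}"
  proof
    assume KS: "K \<inter> S = {}"
    obtain k1 where k1: "k1 \<in> K" using mc_nonempty[OF ne K] by blast
    have k1V: "k1 \<in> V" using mc_sub[OF K] k1 by blast
    obtain s1 where s1: "s1 \<in> S" "E k1 s1" using ms_out[OF S k1V] KS k1 by blast
    have s1V: "s1 \<in> V" using inV2[OF s1(2)] .
    have s1K: "s1 \<notin> K" using KS s1(1) by blast
    obtain k2 where k2: "k2 \<in> K" "\<not> E s1 k2" using mc_out[OF K s1V s1K] by blast
    have k2V: "k2 \<in> V" using mc_sub[OF K] k2(1) by blast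
    obtain s2 where s2: "s2 \<in> S" "E k2 s2" using ms_out[OF S k2V] KS k2(1) by blast
    have s2V: "s2 \<in> V" using inV2[OF s2(2)] .
    have "\<phi> s1 = \<phi> k2" using bip s1V k2V k2(2) by blast
    moreover have "\<phi> k2 \<noteq> \<phi> s2" using bip s2V k2V s2(2) by blast
    ultimately have "E s1 s2" using bip s1V s2V by simp
    thus False using S s1(1) s2(1) unfolding maximal_stable_def stable_def by blast
  qed
qed

lemma grid_CIS_aux:
  fixes a b :: "'a \<Rightarrow> nat" and n :: nat
  assumes adj: "\<forall>x\<in>V. \<forall>y\<in>V. E x y \<longleftrightarrow> x \<noteq> y \<and> (a x = a y \<or> b x = b y)"
    and rng: "\<forall>x\<in>V. a x < n \<and> b x < n"
    and sur: "\<forall>i<n. \<forall>j<n. \<exists>x\<in>V. a x = i \<and> b x = j"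
    and K: "maximal_clique V E K" and S: "maximal_stable V E S" and KS: "K \<inter> S = {}"
    and Ksub: "K \<subseteq> {x\<in>V. a x = \<alpha>}" and k0: "k0 \<in> K"
  shows False
proof -
  have k0V: "k0 \<in> V" using mc_sub[OF K] k0 by blast
  have \<alpha>: "\<alpha> < n" using rng k0V Ksub k0 by auto
  have colcl: "clique V E {x\<in>V. a x = \<alpha>}" using adj unfolding clique_def by auto
  have Keq: "K = {x\<in>V. a x = \<alpha>}" using K colcl Ksub unfolding maximal_clique_def by blast
  have stS: "stable V E S" using S ms_stable by blast
  have ex: "\<forall>j<n. \<exists>s\<in>S. b s = j \<and> a s \<noteq> \<alpha>"
  proof (intro allI impI)
    fix j assume j: "j < n"
    obtain x where x: "x \<in> V" "a x = \<alpha>" "b x = j" using sur \<alpha> j by blast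
    have xK: "x \<in> K" using Keq x by blast
    obtain s where s: "s \<in> S" "E x s" using ms_out[OF S x(1)] xK KS by blast
    have sV: "s \<in> V" using inV2[OF s(2)] .
    have "s \<notin> K" using KS s(1) by blast
    hence "a s \<noteq> \<alpha>" using Keq sV by blast
    moreover hence "b s = j" using adj x s sV by auto
    ultimately show "\<exists>s\<in>S. b s = j \<and> a s \<noteq> \<alpha>" using s(1) by blast
  qed
  hence "\<forall>j. \<exists>s. j < n \<longrightarrow> s \<in> S \<and> b s = j \<and> a s \<noteq> \<alpha>" by blast
  then obtain \<sigma> where \<sigma>0: "\<forall>j. j < n \<longrightarrow> \<sigma> j \<in> S \<and> b (\<sigma> j) = j \<and> a (\<sigma> j) \<noteq> \<alpha>"
    by (rule choice[THEN exE]) blast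
  hence \<sigma>: "\<forall>j<n. \<sigma> j \<in> S \<and> b (\<sigma> j) = j \<and> a (\<sigma> j) \<noteq> \<alpha>" by blast
  have SV: "S \<subseteq> V" using stS by (simp add: stable_def)
  have inj: "inj_on (\<lambda>j. a (\<sigma> j)) {..<n}"
  proof (rule inj_onI)
    fix i j assume i: "i \<in> {..<n}" and j: "j \<in> {..<n}" and e: "a (\<sigma> i) = a (\<sigma> j)"
    have si: "\<sigma> i \<in> S" "\<sigma> j \<in> S" using \<sigma> i j by auto
    have "\<sigma> i = \<sigma> j"
    proof (rule ccontr)
      assume "\<sigma> i \<noteq> \<sigma> j"
      moreover have "\<sigma> i \<in> V" "\<sigma> j \<in> V" using si SV by auto
      ultimately have "E (\<sigma> i) (\<sigma> j)" using adj e by simp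
      thus False using stS si unfolding stable_def by blast
    qed
    moreover have "b (\<sigma> i) = i" using \<sigma>0 i by blast
    moreover have "b (\<sigma> j) = j" using \<sigma>0 j by blast
    ultimately show "i = j" by metis
  qed
  have "(\<lambda>j. a (\<sigma> j)) ` {..<n} \<subseteq> {..<n} - {\<alpha>}"
  proof
    fix y assume "y \<in> (\<lambda>j. a (\<sigma> j)) ` {..<n}"
    then obtain j where j: "j < n" "y = a (\<sigma> j)" by auto
    have "\<sigma> j \<in> V" "a (\<sigma> j) \<noteq> \<alpha>" using \<sigma> j(1) SV by auto
    thus "y \<in> {..<n} - {\<alpha>}" using rng j(2) by auto
  qed
  hence "card {..<n} \<le> card ({..<n} - {\<alpha>})" using card_inj_on_le[OF inj] by blast
  moreover have "card ({..<n} - {\<alpha>}) = n - 1" using \<alpha> by simp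
  ultimately show False using \<alpha> by simp
qed

lemma grid_CIS:
  fixes a b :: "'a \<Rightarrow> nat" and n :: nat
  assumes adj: "\<forall>x\<in>V. \<forall>y\<in>V. E x y \<longleftrightarrow> x \<noteq> y \<and> (a x = a y \<or> b x = b y)"
    and rng: "\<forall>x\<in>V. a x < n \<and> b x < n"
    and sur: "\<forall>i<n. \<forall>j<n. \<exists>x\<in>V. a x = i \<and> b x = j" and ne: "V \<noteq> {}"
  shows "CIS V E"
  unfolding CIS_def strong_clique_def
proof (intro allI impI conjI)
  fix K assume K: "maximal_clique V E K"
  show "clique V E K" using K by (simp add: maximal_clique_def)
  fix S assume S: "maximal_stable V E S"
  show "K \<inter> S \<noteq> {}"
  proof
    assume KS: "K \<inter> S = {}"
    obtain k0 where k0: "k0 \<in> K" using mc_nonempty[OF ne K] by blast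
    have k0V: "k0 \<in> V" using mc_sub[OF K] k0 by blast
    have "K \<subseteq> {x\<in>V. a x = a k0} \<or> K \<subseteq> {x\<in>V. b x = b k0}"
    proof (rule ccontr)
      assume "\<not> ?thesis"
      then obtain k1 k2 where k1: "k1 \<in> K" "a k1 \<noteq> a k0" and k2: "k2 \<in> K" "b k2 \<noteq> b k0"
        using mc_sub[OF K] by blast
      have V12: "k1 \<in> V" "k2 \<in> V" using mc_sub[OF K] k1 k2 by auto
      have "k1 \<noteq> k0" using k1 by blast
      hence "E k1 k0" using mc_adj[OF K k1(1) k0] by blast
      hence b1: "b k1 = b k0" using adj V12 k0V k1(2) by blast
      have "k2 \<noteq> k0" using k2 by blast
      hence "E k2 k0" using mc_adj[OF K k2(1) k0] by blast
      hence a2: "a k2 = a k0" using adj V12 k0V k2(2) by blast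
      have "k1 \<noteq> k2" using k1(2) a2 by blast
      hence "E k1 k2" using mc_adj[OF K k1(1) k2(1)] by blast
      hence "a k1 = a k2 \<or> b k1 = b k2" using adj V12 by blast
      thus False using k1(2) a2 b1 k2(2) by simp
    qed
    thus False
    proof
      assume "K \<subseteq> {x\<in>V. a x = a k0}"
      thus False using grid_CIS_aux[OF adj rng sur K S KS _ k0] by blast
    next
      assume Kb: "K \<subseteq> {x\<in>V. b x = b k0}"
      have adj': "\<forall>x\<in>V. \<forall>y\<in>V. E x y \<longleftrightarrow> x \<noteq> y \<and> (b x = b y \<or> a x = a y)" using adj by blast
      have rng': "\<forall>x\<in>V. b x < n \<and> a x < n" using rng by blast
      have sur': "\<forall>i<n. \<forall>j<n. \<exists>x\<in>V. b x = i \<and> a x = j" using sur by blast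
      show False using grid_CIS_aux[OF adj' rng' sur' K S KS Kb k0] .
    qed
  qed
qed

end

definition gridV :: "nat \<Rightarrow> (nat \<times> nat) set" where "gridV n = {..<n} \<times> {..<n}"
definition gridE :: "nat \<Rightarrow> nat \<times> nat \<Rightarrow> nat \<times> nat \<Rightarrow> bool" where
  "gridE n x y \<longleftrightarrow> x \<in> gridV n \<and> y \<in> gridV n \<and> x \<noteq> y \<and> (fst x = fst y \<or> snd x = snd y)"

lemma grid_graph: "graph (gridV n) (gridE n)"
  unfolding graph_def gridE_def gridV_def by auto

lemma grid_is_CIS: "1 \<le> n \<Longrightarrow> CIS (gridV n) (gridE n)"
proof -
  assume n: "1 \<le> n"
  interpret G: sg "gridV n" "gridE n" using grid_graph by unfold_locales
  show ?thesis
  proof (rule G.grid_CIS[of fst snd n])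
    show "\<forall>x\<in>gridV n. \<forall>y\<in>gridV n. gridE n x y \<longleftrightarrow> x \<noteq> y \<and> (fst x = fst y \<or> snd x = snd y)"
      by (simp add: gridE_def)
    show "\<forall>x\<in>gridV n. fst x < n \<and> snd x < n" by (auto simp: gridV_def)
    show "\<forall>i<n. \<forall>j<n. \<exists>x\<in>gridV n. fst x = i \<and> snd x = j" by (auto simp: gridV_def)
    have "(0,0) \<in> gridV n" using n by (simp add: gridV_def)
    thus "gridV n \<noteq> {}" by blast
  qed
qed

lemma grid_iso: "graph_iso (gridV n) (gridE n) (line_V (Kmn_V n n) (Kmn_E n n)) (line_E (Kmn_V n n) (Kmn_E n n))"
proof -
  interpret G: sg "gridV n" "gridE n" using grid_graph by unfold_locales
  have bid: "bij_betw id {..<n} {..<n}" by simp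
  show ?thesis
  proof (rule G.iso_rook[OF bid bid])
    show "\<forall>v\<in>gridV n. fst v \<in> {..<n}" by (auto simp: gridV_def)
    show "\<forall>v\<in>gridV n. snd v \<in> {..<n}" by (auto simp: gridV_def)
    show "\<forall>v\<in>gridV n. \<forall>w\<in>gridV n. fst v = fst w \<and> snd v = snd w \<longrightarrow> v = w" by (simp add: prod_eq_iff)
    show "\<forall>a\<in>{..<n}. \<forall>b\<in>{..<n}. \<exists>v\<in>gridV n. fst v = a \<and> snd v = b" by (auto simp: gridV_def)
    show "\<forall>v\<in>gridV n. \<forall>w\<in>gridV n. gridE n v w \<longleftrightarrow> v \<noteq> w \<and> (fst v = fst w \<or> snd v = snd w)"
      by (simp add: gridE_def)
  qed
qed

lemma rook_CIS: "1 \<le> n \<Longrightarrow> CIS (line_V (Kmn_V n n) (Kmn_E n n)) (line_E (Kmn_V n n) (Kmn_E n n))"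
  using iso_CIS[OF iso_sym[OF grid_iso] grid_is_CIS] by blast

lemma Kmn_graph: "graph (Kmn_V m n) (Kmn_E m n)"
proof -
  have "finite (Kmn_V m n)" by (simp add: Kmn_V_def)
  thus ?thesis unfolding graph_def Kmn_E_def by blast
qed

lemma Kmn_CIS: "1 \<le> m \<Longrightarrow> CIS (Kmn_V m n) (Kmn_E m n)"
proof -
  assume m: "1 \<le> m"
  interpret G: sg "Kmn_V m n" "Kmn_E m n" using Kmn_graph by unfold_locales
  show ?thesis
  proof (rule G.bip_CIS[of isl])
    show "\<forall>x\<in>Kmn_V m n. \<forall>y\<in>Kmn_V m n. Kmn_E m n x y \<longleftrightarrow> isl x \<noteq> isl y"
      unfolding Kmn_E_def by (auto simp: Kmn_V_def)
    have "Inl 0 \<in> Kmn_V m n" using m by (simp add: Kmn_V_def)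
    thus "Kmn_V m n \<noteq> {}" by blast
  qed
qed


theorem theorem1:
  fixes V :: "'a set" and E :: "'a \<Rightarrow> 'a \<Rightarrow> bool"
  assumes "graph V E" and "connected_graph V E" and "diamond_free V E"
  shows "CIS V E \<longleftrightarrow>
           (clique_simplicial V E
            \<or> (\<exists>m n. m \<ge> 2 \<and> n \<ge> 2 \<and> graph_iso V E (Kmn_V m n) (Kmn_E m n))
            \<or> (\<exists>n. n \<ge> 3 \<and> graph_iso V E (line_V (Kmn_V n n) (Kmn_E n n)) (line_E (Kmn_V n n) (Kmn_E n n))))"
proof
  interpret G: sg V E using assms(1) by unfold_locales
  assume cisV: "CIS V E"
  interpret C: cisl V E using assms(1,3) cisV by unfold_locales auto
  show "clique_simplicial V E
            \<or> (\<exists>m n. m \<ge> 2 \<and> n \<ge> 2 \<and> graph_iso V E (Kmn_V m n) (Kmn_E m n))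
            \<or> (\<exists>n. n \<ge> 3 \<and> graph_iso V E (line_V (Kmn_V n n) (Kmn_E n n)) (line_E (Kmn_V n n) (Kmn_E n n)))"
  proof (cases "clique_simplicial V E")
    case True thus ?thesis by blast
  next
    case False
    then obtain K0 where K0: "maximal_clique V E K0" "\<not> simplicial_clique V E K0"
      unfolding clique_simplicial_def by blast
    have ns0: "\<forall>w\<in>K0. \<not> simplicial_vertex V E w"
    proof
      fix w assume w: "w \<in> K0"
      show "\<not> simplicial_vertex V E w"
      proof
        assume sw: "simplicial_vertex V E w"
        have cl: "clique V E (closed_nbhd V E w)" using sw by (simp add: simplicial_vertex_def)
        have "K0 \<subseteq> closed_nbhd V E w"
        proof
          fix u assume u: "u \<in> K0"
          show "u \<in> closed_nbhd V E w"
          proof (cases "u = w")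
            case True thus ?thesis by (simp add: closed_nbhd_def)
          next
            case False
            hence "E w u" using G.mc_adj[OF K0(1) w u] by simp
            thus ?thesis using G.inV2 by (simp add: closed_nbhd_def)
          qed
        qed
        hence "closed_nbhd V E w = K0" using K0(1) cl unfolding maximal_clique_def by blast
        hence "simplicial_clique V E K0" using sw unfolding simplicial_clique_def by blast
        thus False using K0(2) by simp
      qed
    qed
    have nsall: "\<forall>v\<in>V. \<not> simplicial_vertex V E v" using C.all_ns[OF assms(2) K0(1) ns0] .
    interpret N: nsl V E using assms cisV nsall by unfold_locales auto
    have Vne: "V \<noteq> {}" using assms(2) by (simp add: connected_graph_def)
    show ?thesis
    proof (cases "\<exists>K. maximal_clique V E K \<and> card K = 2")
      case True
      then obtain K where K: "maximal_clique V E K" "card K = 2" by blast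
      then obtain x y where xy: "K = {x,y}" "x \<noteq> y" using card_2_iff by metis
      have "\<exists>m n. m \<ge> 2 \<and> n \<ge> 2 \<and> graph_iso V E (Kmn_V m n) (Kmn_E m n)"
        using N.caseA[OF _ xy(2)] K(1) xy(1) by blast
      thus ?thesis by blast
    next
      case no2: False
      let ?MC = "{K. maximal_clique V E K}"
      have "?MC \<subseteq> Pow V" using G.mc_sub by blast
      hence fMC: "finite ?MC" using G.finV finite_subset by blast
      obtain v0 where v0: "v0 \<in> V" using Vne by blast
      obtain Q where Q: "maximal_clique V E Q" using G.ext_clique[OF G.clique_single[OF v0]] by blast
      define k where "k = Min (card ` ?MC)"
      have kin: "k \<in> card ` ?MC" unfolding k_def using fMC Q by (intro Min_in) auto
      then obtain L where L: "maximal_clique V E L" "card L = k" unfolding k_def by auto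
      have kmin: "\<forall>K. maximal_clique V E K \<longrightarrow> k \<le> card K"
        unfolding k_def using fMC by (auto intro: Min_le)
      have ge2: "\<And>K. maximal_clique V E K \<Longrightarrow> 2 \<le> card K"
      proof -
        fix K assume K: "maximal_clique V E K"
        have fK: "finite K" using G.mc_fin[OF K] .
        have Kne: "K \<noteq> {}" using G.mc_nonempty[OF Vne K] .
        have "card K \<noteq> 1"
        proof
          assume "card K = 1"
          then obtain v where v: "K = {v}" by (auto simp: card_1_singleton_iff)
          have vK: "v \<in> K" using v by simp
          obtain u where u: "E v u" "u \<notin> K" using N.ns_out[OF K vK] by blast
          have cl: "clique V E {v,u}" using G.clique_pair[OF u(1)] .
          have sub: "K \<subseteq> {v,u}" using v by simp
          have "\<forall>K'. clique V E K' \<and> K \<subseteq> K' \<longrightarrow> K' = K" using K unfolding maximal_clique_def by simp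
          hence "{v,u} = K" using cl sub by blast
          thus False using u(2) by blast
        qed
        moreover have "card K \<noteq> 0" using fK Kne by simp
        ultimately show "2 \<le> card K" by linarith
      qed
      have k3: "3 \<le> k"
      proof -
        have "2 \<le> k" using ge2[OF L(1)] L(2) by simp
        moreover have "k \<noteq> 2" using no2 L by blast
        ultimately show ?thesis by linarith
      qed
      have Lne: "L \<noteq> {}" using L(2) k3 by auto
      then obtain p0 where p0: "p0 \<in> L" by blast
      interpret M: mkL V E k L p0 using assms cisV nsall kmin k3 L p0 by unfold_locales auto
      have "graph_iso V E (line_V (Kmn_V k k) (Kmn_E k k)) (line_E (Kmn_V k k) (Kmn_E k k))"
        using M.caseB .
      thus ?thesis using k3 by blast
    qed
  qed
next
  assume H: "clique_simplicial V E
            \<or> (\<exists>m n. m \<ge> 2 \<and> n \<ge> 2 \<and> graph_iso V E (Kmn_V m n) (Kmn_E m n))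
            \<or> (\<exists>n. n \<ge> 3 \<and> graph_iso V E (line_V (Kmn_V n n) (Kmn_E n n)) (line_E (Kmn_V n n) (Kmn_E n n)))"
  interpret G: sg V E using assms(1) by unfold_locales
  show "CIS V E"
  proof (cases "clique_simplicial V E")
    case True thus ?thesis using G.cs_CIS by blast
  next
    case False
    show ?thesis
    proof (cases "\<exists>m n. m \<ge> 2 \<and> n \<ge> 2 \<and> graph_iso V E (Kmn_V m n) (Kmn_E m n)")
      case True
      then obtain m n where mn: "m \<ge> 2" "graph_iso V E (Kmn_V m n) (Kmn_E m n)" by blast
      have "CIS (Kmn_V m n) (Kmn_E m n)" using Kmn_CIS mn(1) by simp
      thus ?thesis using iso_CIS[OF mn(2)] by blast
    next
      case F2: False
      then obtain n where n: "n \<ge> 3" "graph_iso V E (line_V (Kmn_V n n) (Kmn_E n n)) (line_E (Kmn_V n n) (Kmn_E n n))"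
        using H False by blast
      have "CIS (line_V (Kmn_V n n) (Kmn_E n n)) (line_E (Kmn_V n n) (Kmn_E n n))" using rook_CIS n(1) by simp
      thus ?thesis using iso_CIS[OF n(2)] by blast
    qed
  qed
qed


end
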